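(* (1) $U_{K,L,twist}$, with the bialgebra structure of the context and the antihomomorphism $\mathsf{S}$ given by $\mathsf{S}(K)=\overline{K}$, $\mathsf{S}(\overline{K})=K$, $\mathsf{S}(L)=\overline{L}$, $\mathsf{S}(\overline{L})=L$, $\mathsf{S}(E)=-E(\overline{K}+\overline{L})$, $\mathsf{S}(F)=-(K+L)F$, is a Hopf algebra with antipode $\mathsf{S}$, i.e. $\mathsf{S}\star\mathsf{id}=\mathsf{id}\star\mathsf{S}=\eta\circ\varepsilon$. (2) $U_{K,L,norm}$, with the bialgebra structure of the context and the antihomomorphism $\mathsf{T}$ given by the same formulas ($\mathsf{T}(K)=\overline{K}$, $\mathsf{T}(\overline{K})=K$, $\mathsf{T}(L)=\overline{L}$, $\mathsf{T}(\overline{L})=L$, $\mathsf{T}(E)=-E(\overline{K}+\overline{L})$, $\mathsf{T}(F)=-(K+L)F$), is a von Neumann–Hopf algebra, i.e. $\mathsf{id}\star\mathsf{T}\star\mathsf{id}=\mathsf{id}$ and $\mathsf{T}\star\mathsf{id}\star\mathsf{T}=\mathsf{T}$.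
   Context: Fix $q\in\mathbb{C}$, $q\neq 0,\pm1$. Both $U_{K,L,norm}$ and $U_{K,L,twist}$ are unital associative $\mathbb{C}$-algebras generated by $K,\overline{K},L,\overline{L},E,F$ subject to the common relations $K\overline{K}K=K$, $\overline{K}K\overline{K}=\overline{K}$, $K\overline{K}=\overline{K}K$, $L\overline{L}L=L$, $\overline{L}L\overline{L}=\overline{L}$, $L\overline{L}=\overline{L}L$, $K\overline{K}+L\overline{L}=\mathbf{1}$, $EF-FE=\frac{(K+L)-(\overline{K}+\overline{L})}{q-q^{-1}}$, together with: for $U_{K,L,norm}$: $KE=q^2EK$, $LE=q^2EL$, $\overline{K}E=q^{-2}E\overline{K}$, $\overline{L}E=q^{-2}E\overline{L}$, $KF=q^{-2}FK$, $LF=q^{-2}FL$, $\overline{K}F=q^2F\overline{K}$, $\overline{L}F=q^2F\overline{L}$; for $U_{K,L,twist}$: $KE=q^2EL$, $LE=q^2EK$, $\overline{K}E=q^{-2}E\overline{L}$, $\overline{L}E=q^{-2}E\overline{K}$, $KF=q^{-2}FL$, $LF=q^{-2}FK$, $\overline{K}F=q^2F\overline{L}$, $\overline{L}F=q^2F\overline{K}$. Bialgebra structures: in both algebras $\Delta(E)=\mathbf{1}\otimes E+E\otimes(K+L)$, $\Delta(F)=F\otimes\mathbf{1}+(\overline{K}+\overline{L})\otimes F$, $\varepsilon(K)=\varepsilon(\overline{K})=1$, $\varepsilon(L)=\varepsilon(\overline{L})=\varepsilon(E)=\varepsilon(F)=0$; in $U_{K,L,norm}$: $\Delta(K)=K\otimes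 K$, $\Delta(\overline{K})=\overline{K}\otimes\overline{K}$, $\Delta(L)=L\otimes L+L\otimes K+K\otimes L$, $\Delta(\overline{L})=\overline{L}\otimes\overline{L}+\overline{L}\otimes\overline{K}+\overline{K}\otimes\overline{L}$; in $U_{K,L,twist}$: $\Delta(K)=K\otimes K+L\otimes L$, $\Delta(\overline{K})=\overline{K}\otimes\overline{K}+\overline{L}\otimes\overline{L}$, $\Delta(L)=L\otimes K+K\otimes L$, $\Delta(\overline{L})=\overline{L}\otimes\overline{K}+\overline{K}\otimes\overline{L}$ (each extended to algebra homomorphisms). Convolution: $A\star B=\mu\circ(A\otimes B)\circ\Delta$; $\eta(\lambda)=\lambda\mathbf{1}$. *)

theory Defs
  imports Complex_Main "HOL-Library.Poly_Mapping" "HOL-Library.Product_Plus"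
begin

datatype gen = GK | GKb | GL | GLb | GE | GF

text \<open>Words in the generators form the free monoid (concatenation written as +).\<close>
datatype word = Wd "gen list"

fun letters :: "word \<Rightarrow> gen list" where "letters (Wd xs) = xs"

instantiation word :: monoid_add
begin
definition zero_word_def: "0 = Wd []"
definition plus_word_def: "a + b = Wd (letters a @ letters b)"
instance
  by standard (cases rule: word.exhaust, auto simp: zero_word_def plus_word_def
      elim!: word.exhaust[of _ "_"] ; (metis letters.simps word.exhaust))+
end

text \<open>Free associative unital C-algebra on gen, and its tensor square
  (basis: pairs of words, multiplication componentwise).\<close>
type_synonym fa = "word \<Rightarrow>\<^sub>0 complex"
type_synonym ta = "(word \<times> word) \<Rightarrow>\<^sub>0 complex"

definition cst :: "complex \<Rightarrow> ('k::monoid_add \<Rightarrow>\<^sub>0 complex)" where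
  "cst c = Poly_Mapping.single 0 c"

definition gn :: "gen \<Rightarrow> fa" where "gn x = Poly_Mapping.single (Wd [x]) 1"

abbreviation "K \<equiv> gn GK"
abbreviation "Kb \<equiv> gn GKb"
abbreviation "L \<equiv> gn GL"
abbreviation "Lb \<equiv> gn GLb"
abbreviation "E \<equiv> gn GE"
abbreviation "F \<equiv> gn GF"

inductive_set ideal_gen :: "'a::ring_1 set \<Rightarrow> 'a set" for R where
  base: "r \<in> R \<Longrightarrow> r \<in> ideal_gen R"
| zero: "0 \<in> ideal_gen R"
| add: "a \<in> ideal_gen R \<Longrightarrow> b \<in> ideal_gen R \<Longrightarrow> a + b \<in> ideal_gen R"
| lmul: "a \<in> ideal_gen R \<Longrightarrow> x * a \<in> ideal_gen R"
| rmul: "a \<in> ideal_gen R \<Longrightarrow> a * x \<in> ideal_gen R"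

definition common_rels :: "complex \<Rightarrow> fa set" where
  "common_rels q = {K * Kb * K - K, Kb * K * Kb - Kb, K * Kb - Kb * K,
     L * Lb * L - L, Lb * L * Lb - Lb, L * Lb - Lb * L,
     K * Kb + L * Lb - 1,
     E * F - F * E - cst (1 / (q - inverse q)) * ((K + L) - (Kb + Lb))}"

definition norm_rels :: "complex \<Rightarrow> fa set" where
  "norm_rels q = common_rels q \<union>
    {K * E - cst (q^2) * E * K, L * E - cst (q^2) * E * L,
     Kb * E - cst (inverse (q^2)) * E * Kb, Lb * E - cst (inverse (q^2)) * E * Lb,
     K * F - cst (inverse (q^2)) * F * K, L * F - cst (inverse (q^2)) * F * L,
     Kb * F - cst (q^2) * F * Kb, Lb * F - cst (q^2) * F * Lb}"

definition twist_rels :: "complex \<Rightarrow> fa set" where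
  "twist_rels q = common_rels q \<union>
    {K * E - cst (q^2) * E * L, L * E - cst (q^2) * E * K,
     Kb * E - cst (inverse (q^2)) * E * Lb, Lb * E - cst (inverse (q^2)) * E * Kb,
     K * F - cst (inverse (q^2)) * F * L, L * F - cst (inverse (q^2)) * F * K,
     Kb * F - cst (q^2) * F * Lb, Lb * F - cst (q^2) * F * Kb}"

text \<open>The defining ideals: U_norm = fa / I_norm, U_twist = fa / I_twist.\<close>
definition I_norm :: "complex \<Rightarrow> fa set" where "I_norm q = ideal_gen (norm_rels q)"
definition I_twist :: "complex \<Rightarrow> fa set" where "I_twist q = ideal_gen (twist_rels q)"

definition lin_ext :: "(word \<Rightarrow> ('k::monoid_add \<Rightarrow>\<^sub>0 complex)) \<Rightarrow> fa \<Rightarrow> ('k \<Rightarrow>\<^sub>0 complex)" where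
  "lin_ext f p = (\<Sum>w\<in>Poly_Mapping.keys p. cst (Poly_Mapping.lookup p w) * f w)"

definition hom_ext :: "(gen \<Rightarrow> ('k::monoid_add \<Rightarrow>\<^sub>0 complex)) \<Rightarrow> fa \<Rightarrow> ('k \<Rightarrow>\<^sub>0 complex)" where
  "hom_ext \<phi> = lin_ext (\<lambda>w. prod_list (map \<phi> (letters w)))"

definition antihom_ext :: "(gen \<Rightarrow> fa) \<Rightarrow> fa \<Rightarrow> fa" where
  "antihom_ext \<phi> = lin_ext (\<lambda>w. prod_list (map \<phi> (rev (letters w))))"

definition counit_ext :: "(gen \<Rightarrow> complex) \<Rightarrow> fa \<Rightarrow> complex" where
  "counit_ext e p = (\<Sum>w\<in>Poly_Mapping.keys p. Poly_Mapping.lookup p w * prod_list (map e (letters w)))"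

definition tens :: "fa \<Rightarrow> fa \<Rightarrow> ta" where
  "tens a b = (\<Sum>u\<in>Poly_Mapping.keys a. \<Sum>v\<in>Poly_Mapping.keys b. Poly_Mapping.single (u, v) (Poly_Mapping.lookup a u * Poly_Mapping.lookup b v))"

definition tmap :: "(fa \<Rightarrow> fa) \<Rightarrow> (fa \<Rightarrow> fa) \<Rightarrow> ta \<Rightarrow> ta" where
  "tmap A B t = (\<Sum>uv\<in>Poly_Mapping.keys t. cst (Poly_Mapping.lookup t uv) *
      tens (A (Poly_Mapping.single (fst uv) 1)) (B (Poly_Mapping.single (snd uv) 1)))"

definition mu :: "ta \<Rightarrow> fa" where
  "mu t = (\<Sum>uv\<in>Poly_Mapping.keys t. Poly_Mapping.single (fst uv + snd uv) (Poly_Mapping.lookup t uv))"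

definition eta :: "complex \<Rightarrow> fa" where "eta c = cst c"

definition conv :: "(fa \<Rightarrow> ta) \<Rightarrow> (fa \<Rightarrow> fa) \<Rightarrow> (fa \<Rightarrow> fa) \<Rightarrow> fa \<Rightarrow> fa" where
  "conv \<Delta> A B x = mu (tmap A B (\<Delta> x))"

fun delta_norm_gen :: "gen \<Rightarrow> ta" where
  "delta_norm_gen GK = tens K K"
| "delta_norm_gen GKb = tens Kb Kb"
| "delta_norm_gen GL = tens L L + tens L K + tens K L"
| "delta_norm_gen GLb = tens Lb Lb + tens Lb Kb + tens Kb Lb"
| "delta_norm_gen GE = tens 1 E + tens E (K + L)"
| "delta_norm_gen GF = tens F 1 + tens (Kb + Lb) F"

fun delta_twist_gen :: "gen \<Rightarrow> ta" where
  "delta_twist_gen GK = tens K K + tens L L"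
| "delta_twist_gen GKb = tens Kb Kb + tens Lb Lb"
| "delta_twist_gen GL = tens L K + tens K L"
| "delta_twist_gen GLb = tens Lb Kb + tens Kb Lb"
| "delta_twist_gen GE = tens 1 E + tens E (K + L)"
| "delta_twist_gen GF = tens F 1 + tens (Kb + Lb) F"

fun eps_gen :: "gen \<Rightarrow> complex" where
  "eps_gen GK = 1" | "eps_gen GKb = 1" | "eps_gen GL = 0" | "eps_gen GLb = 0"
| "eps_gen GE = 0" | "eps_gen GF = 0"

fun S_gen :: "gen \<Rightarrow> fa" where
  "S_gen GK = Kb" | "S_gen GKb = K" | "S_gen GL = Lb" | "S_gen GLb = L"
| "S_gen GE = - (E * (Kb + Lb))" | "S_gen GF = - ((K + L) * F)"

definition Delta_norm :: "fa \<Rightarrow> ta" where "Delta_norm = hom_ext delta_norm_gen"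
definition Delta_twist :: "fa \<Rightarrow> ta" where "Delta_twist = hom_ext delta_twist_gen"
definition eps :: "fa \<Rightarrow> complex" where "eps = counit_ext eps_gen"
text \<open>The antihomomorphism S (on U_twist) and T (on U_norm), given by the same formulas.\<close>
definition antipode :: "fa \<Rightarrow> fa" where "antipode = antihom_ext S_gen"

end

theory Submission
  imports Defs
begin


section \<open>Generic poly-mapping infrastructure\<close>

lemma pm_decomp:
  "(p::'a \<Rightarrow>\<^sub>0 'b::comm_monoid_add) = (\<Sum>k\<in>Poly_Mapping.keys p. Poly_Mapping.single k (Poly_Mapping.lookup p k))"
  by (rule poly_mapping_eqI) (auto simp: lookup_sum lookup_single when_def in_keys_iff)

lemma pm_induct[case_names zero single add]:
  assumes "P 0" "\<And>k c. P (Poly_Mapping.single k c)" "\<And>a b. P a \<Longrightarrow> P b \<Longrightarrow> P (a + b)"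
  shows "P (p::'a \<Rightarrow>\<^sub>0 'b::comm_monoid_add)"
proof -
  have "\<And>A. finite A \<Longrightarrow> P (\<Sum>k\<in>A. Poly_Mapping.single k (Poly_Mapping.lookup p k))"
  proof -
    fix A :: "'a set" assume "finite A"
    then show "P (\<Sum>k\<in>A. Poly_Mapping.single k (Poly_Mapping.lookup p k))"
      by (induction A rule: finite_induct) (auto intro: assms)
  qed
  then show ?thesis by (subst pm_decomp) simp
qed

definition dl :: "'k \<Rightarrow> ('k \<Rightarrow>\<^sub>0 complex)" where "dl k = Poly_Mapping.single k 1"

lemma cst_0[simp]: "cst 0 = 0" by (simp add: cst_def)
lemma cst_1[simp]: "cst 1 = 1" by (simp add: cst_def)
lemma cst_add: "cst (a + b) = cst a + cst b" by (simp add: cst_def single_add)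
lemma cst_uminus: "cst (- a) = - cst a" by (simp add: cst_def single_uminus)
lemma cst_diff: "cst (a - b) = cst a - cst b" by (simp add: cst_def single_diff)
lemma cst_mult: "cst a * cst b = cst (a * b)" by (simp add: cst_def mult_single)
lemma single_cst: "Poly_Mapping.single k c = cst c * dl k" by (simp add: cst_def dl_def mult_single)
lemma dl_add: "dl (u + v) = dl u * dl v" by (simp add: dl_def mult_single)
lemma dl_zero: "dl 0 = 1" by (simp add: dl_def)

lemma cst_central: "cst c * x = x * cst c"
  by (induction x rule: pm_induct) (simp_all add: cst_def mult_single distrib_left distrib_right mult.commute)

lemma cst_left: "x * (cst c * y) = cst c * (x * y)"
proof -
  have "x * (cst c * y) = (x * cst c) * y" by (simp add: mult.assoc)
  also have "\<dots> = (cst c * x) * y" by (simp only: cst_central[of c x])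
  finally show ?thesis by (simp add: mult.assoc)
qed
lemma cst_cst: "cst a * (cst b * y) = cst (a * b) * y"
  by (simp add: cst_mult[symmetric] mult.assoc)

lemma cst_mm: "(cst a * x) * (cst b * y) = cst (a * b) * (x * y)"
proof -
  have "(cst a * x) * (cst b * y) = cst a * (x * (cst b * y))" by (simp only: mult.assoc)
  also have "\<dots> = cst a * (cst b * (x * y))" by (simp only: cst_left[of x b y])
  also have "\<dots> = cst (a * b) * (x * y)" by (simp only: mult.assoc[symmetric] cst_mult)
  finally show ?thesis .
qed

lemma cst_single: "cst c * Poly_Mapping.single k d = Poly_Mapping.single k (c * d)"
  by (simp add: cst_def mult_single)

lemma cst_sum: "cst (sum f A) = (\<Sum>a\<in>A. cst (f a))"
  by (induction A rule: infinite_finite_induct) (simp_all add: cst_add)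

definition linx :: "('a \<Rightarrow> ('k::monoid_add \<Rightarrow>\<^sub>0 complex)) \<Rightarrow> ('a \<Rightarrow>\<^sub>0 complex) \<Rightarrow> ('k \<Rightarrow>\<^sub>0 complex)" where
  "linx f p = (\<Sum>w\<in>Poly_Mapping.keys p. cst (Poly_Mapping.lookup p w) * f w)"

lemma linx_superset:
  "finite S \<Longrightarrow> Poly_Mapping.keys p \<subseteq> S \<Longrightarrow> linx f p = (\<Sum>w\<in>S. cst (Poly_Mapping.lookup p w) * f w)"
  unfolding linx_def by (rule sum.mono_neutral_left) (auto simp: in_keys_iff)

lemma linx_add: "linx f (p + r) = linx f p + linx f r"
proof -
  let ?S = "Poly_Mapping.keys p \<union> Poly_Mapping.keys r"
  have "linx f (p + r) = (\<Sum>w\<in>?S. cst (Poly_Mapping.lookup (p + r) w) * f w)"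
    by (rule linx_superset) (auto dest: subsetD[OF keys_add])
  also have "\<dots> = (\<Sum>w\<in>?S. cst (Poly_Mapping.lookup p w) * f w) + (\<Sum>w\<in>?S. cst (Poly_Mapping.lookup r w) * f w)"
    by (simp add: lookup_add cst_add distrib_right sum.distrib)
  also have "\<dots> = linx f p + linx f r"
    by (simp add: linx_superset[symmetric])
  finally show ?thesis .
qed

lemma linx_zero[simp]: "linx f 0 = 0" by (simp add: linx_def)
lemma linx_single: "linx f (Poly_Mapping.single k c) = cst c * f k" by (simp add: linx_def)
lemma linx_dl: "linx f (dl k) = f k" by (simp add: linx_def dl_def)

lemma linx_uminus: "linx f (- p) = - linx f p"
proof -
  have "linx f (- p) + linx f p = 0" by (simp only: linx_add[symmetric] add.left_inverse linx_zero)
  thus ?thesis by (simp add: eq_neg_iff_add_eq_0)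
qed
lemma linx_diff: "linx f (p - r) = linx f p - linx f r"
  by (simp only: diff_conv_add_uminus linx_add linx_uminus)
lemma linx_cst: "linx f (cst c * (p :: 'a::monoid_add \<Rightarrow>\<^sub>0 complex)) = cst c * linx f p"
proof (induction p rule: pm_induct)
  case zero
  then show ?case by simp
next
  case (single k d)
  have "linx f (cst c * Poly_Mapping.single k d) = linx f (Poly_Mapping.single k (c * d))"
    by (simp only: cst_single)
  also have "\<dots> = cst (c * d) * f k" by (rule linx_single)
  also have "\<dots> = cst c * (cst d * f k)" by (simp only: cst_cst)
  also have "\<dots> = cst c * linx f (Poly_Mapping.single k d)" by (simp only: linx_single)
  finally show ?case .
next
  case (add a b)
  then show ?case by (simp only: distrib_left linx_add)
qed

lemma linx_comp: "linx g (linx f p) = linx (\<lambda>k. linx g (f k)) p"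
  by (induction p rule: pm_induct) (simp_all add: linx_add linx_single linx_cst)

lemma linx_fadd: "linx (\<lambda>k. f k + g k) p = linx f p + linx g p"
  by (induction p rule: pm_induct) (simp_all add: linx_add linx_single distrib_left)
lemma linx_rmul: "linx (\<lambda>k. f k * y) p = linx f p * y"
  by (induction p rule: pm_induct) (simp_all add: linx_add linx_single distrib_right mult.assoc)
lemma linx_lmul: "linx (\<lambda>k. y * f k) p = y * linx f p"
  by (induction p rule: pm_induct) (simp_all add: linx_add linx_single distrib_left cst_left)

lemma linx_id: "linx dl p = p"
  by (induction p rule: pm_induct) (simp_all add: linx_add single_cst linx_cst linx_dl)

definition islin :: "(('k::monoid_add \<Rightarrow>\<^sub>0 complex) \<Rightarrow> ('j::monoid_add \<Rightarrow>\<^sub>0 complex)) \<Rightarrow> bool" where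
  "islin A \<longleftrightarrow> (\<forall>p. A p = linx (\<lambda>k. A (dl k)) p)"

lemma islinD: "islin A \<Longrightarrow> A p = linx (\<lambda>k. A (dl k)) p" unfolding islin_def by blast
lemma islin_add: assumes "islin A" shows "A (p + r) = A p + A r"
proof -
  have "A (p + r) = linx (\<lambda>k. A (dl k)) (p + r)" by (rule islinD[OF assms])
  also have "\<dots> = linx (\<lambda>k. A (dl k)) p + linx (\<lambda>k. A (dl k)) r" by (rule linx_add)
  also have "\<dots> = A p + A r" by (simp only: islinD[OF assms, symmetric])
  finally show ?thesis .
qed
lemma islin_zero: assumes "islin A" shows "A 0 = 0"
proof -
  have "A 0 = linx (\<lambda>k. A (dl k)) 0" by (rule islinD[OF assms])
  then show ?thesis by (simp only: linx_zero)
qed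
lemma islin_uminus: assumes "islin A" shows "A (- p) = - A p"
proof -
  have "A (- p) = linx (\<lambda>k. A (dl k)) (- p)" by (rule islinD[OF assms])
  also have "\<dots> = - linx (\<lambda>k. A (dl k)) p" by (rule linx_uminus)
  also have "\<dots> = - A p" by (simp only: islinD[OF assms, symmetric])
  finally show ?thesis .
qed
lemma islin_diff: assumes "islin A" shows "A (p - r) = A p - A r"
proof -
  have "A (p - r) = linx (\<lambda>k. A (dl k)) (p - r)" by (rule islinD[OF assms])
  also have "\<dots> = linx (\<lambda>k. A (dl k)) p - linx (\<lambda>k. A (dl k)) r" by (rule linx_diff)
  also have "\<dots> = A p - A r" by (simp only: islinD[OF assms, symmetric])
  finally show ?thesis .
qed
lemma islin_cst: assumes "islin A" shows "A (cst c * p) = cst c * A p"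
proof -
  have "A (cst c * p) = linx (\<lambda>k. A (dl k)) (cst c * p)" by (rule islinD[OF assms])
  also have "\<dots> = cst c * linx (\<lambda>k. A (dl k)) p" by (rule linx_cst)
  also have "\<dots> = cst c * A p" by (simp only: islinD[OF assms, symmetric])
  finally show ?thesis .
qed
lemma islin_single: assumes "islin A" shows "A (Poly_Mapping.single k c) = cst c * A (dl k)"
proof -
  have "A (Poly_Mapping.single k c) = linx (\<lambda>k. A (dl k)) (Poly_Mapping.single k c)" by (rule islinD[OF assms])
  then show ?thesis by (simp only: linx_single)
qed

lemma islin_linx: "islin (linx f)"
  unfolding islin_def by (simp add: linx_dl)

lemma islin_id: "islin id"
  by (simp add: islin_def linx_id)

lemma islin_comp: assumes "islin A" "islin B" shows "islin (\<lambda>x. B (A x))"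
  unfolding islin_def
proof
  fix p
  have "B (A p) = linx (\<lambda>k. B (dl k)) (linx (\<lambda>k. A (dl k)) p)"
    using islinD[OF assms(1), of p] islinD[OF assms(2), of "A p"] by simp
  also have "\<dots> = linx (\<lambda>k. linx (\<lambda>k. B (dl k)) (A (dl k))) p" by (rule linx_comp)
  also have "\<dots> = linx (\<lambda>k. B (A (dl k))) p" by (simp only: islinD[OF assms(2), symmetric])
  finally show "B (A p) = linx (\<lambda>k. B (A (dl k))) p" .
qed

lemma letters_plus[simp]: "letters (u + v) = letters u @ letters v" by (simp add: plus_word_def)
lemma letters_zero[simp]: "letters 0 = []" by (simp add: zero_word_def)
lemma Wd_append: "Wd (xs @ ys) = Wd xs + Wd ys" by (simp add: plus_word_def)

section \<open>Homomorphic extensions\<close>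

lemma hom_ext_linx: "hom_ext \<phi> = linx (\<lambda>w. prod_list (map \<phi> (letters w)))"
  by (simp add: hom_ext_def lin_ext_def linx_def fun_eq_iff)
lemma antihom_ext_linx: "antihom_ext \<phi> = linx (\<lambda>w. prod_list (map \<phi> (rev (letters w))))"
  by (simp add: antihom_ext_def lin_ext_def linx_def fun_eq_iff)

lemma islin_hom: "islin (hom_ext \<phi>)" by (simp add: hom_ext_linx islin_linx)
lemma islin_antihom: "islin (antihom_ext \<phi>)" by (simp add: antihom_ext_linx islin_linx)

lemma hom_dl: "hom_ext \<phi> (dl w) = prod_list (map \<phi> (letters w))"
  by (simp add: hom_ext_linx linx_dl)
lemma antihom_dl: "antihom_ext \<phi> (dl w) = prod_list (map \<phi> (rev (letters w)))"
  by (simp add: antihom_ext_linx linx_dl)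

lemma hom_mult: "hom_ext \<phi> (p * r) = hom_ext \<phi> p * hom_ext \<phi> r"
proof (induction p rule: pm_induct)
  case (single k c)
  show ?case
    by (induction r rule: pm_induct)
       (simp_all add: hom_ext_linx linx_add linx_single mult_single distrib_left cst_mm)
qed (simp_all add: hom_ext_linx linx_add distrib_right)

lemma antihom_mult: "antihom_ext \<phi> (p * r) = antihom_ext \<phi> r * antihom_ext \<phi> p"
proof (induction p rule: pm_induct)
  case (single k c)
  show ?case
    by (induction r rule: pm_induct)
       (simp_all add: antihom_ext_linx linx_add linx_single mult_single distrib_left distrib_right cst_mm mult.commute)
qed (simp_all add: antihom_ext_linx linx_add distrib_left distrib_right)

lemma hom_one: "hom_ext \<phi> 1 = 1"
  by (metis dl_zero hom_dl letters_zero list.simps(8) prod_list.Nil)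
lemma antihom_one: "antihom_ext \<phi> 1 = 1"
  by (metis dl_zero antihom_dl letters_zero list.simps(8) rev.simps(1) prod_list.Nil)
lemma hom_cst: "hom_ext \<phi> (cst c) = cst c"
  by (metis hom_one islin_cst islin_hom mult.right_neutral)
lemma antihom_cst: "antihom_ext \<phi> (cst c) = cst c"
  by (metis antihom_one islin_cst islin_antihom mult.right_neutral)
lemma hom_gn: "hom_ext \<phi> (gn g) = \<phi> g"
  by (simp add: gn_def hom_ext_linx linx_single)
lemma antihom_gn: "antihom_ext \<phi> (gn g) = \<phi> g"
  by (simp add: gn_def antihom_ext_linx linx_single)

section \<open>Tensors, mu, conv\<close>

lemma islin_linx_app: assumes "islin Fn" shows "Fn (linx f a) = linx (\<lambda>u. Fn (f u)) a"
proof -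
  have "Fn (linx f a) = linx (\<lambda>k. Fn (dl k)) (linx f a)" by (rule islinD[OF assms])
  also have "\<dots> = linx (\<lambda>u. linx (\<lambda>k. Fn (dl k)) (f u)) a" by (rule linx_comp)
  also have "\<dots> = linx (\<lambda>u. Fn (f u)) a" by (simp only: islinD[OF assms, symmetric])
  finally show ?thesis .
qed

lemma tens_linx: "tens a b = linx (\<lambda>u. linx (\<lambda>v. dl (u, v)) b) a"
  by (simp add: tens_def linx_def sum_distrib_left single_cst cst_cst)

lemma tens_zero_l[simp]: "tens 0 b = 0" by (simp add: tens_def)
lemma tens_zero_r[simp]: "tens a 0 = 0" by (simp add: tens_def)
lemma tens_add_l: "tens (a + a') b = tens a b + tens a' b" by (simp add: tens_linx linx_add)
lemma tens_add_r: "tens a (b + b') = tens a b + tens a b'"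
  by (simp add: tens_linx linx_add linx_fadd)
lemma tens_single: "tens (Poly_Mapping.single u x) (Poly_Mapping.single v y) = Poly_Mapping.single (u, v) (x * y)"
  by (simp add: tens_linx linx_cst linx_dl single_cst cst_cst)

lemma tens_mult: "tens a b * tens c d = tens (a * c) (b * d)"
proof (induction a rule: pm_induct)
  case (single u x)
  show ?case
  proof (induction b rule: pm_induct)
    case (single v y)
    show ?case
    proof (induction c rule: pm_induct)
      case (single u' z)
      show ?case
        by (induction d rule: pm_induct)
           (simp_all add: tens_add_l tens_add_r distrib_left distrib_right tens_single mult_single mult_ac)
    qed (simp_all add: tens_add_l tens_add_r distrib_left distrib_right)
  qed (simp_all add: tens_add_l tens_add_r distrib_left distrib_right)
qed (simp_all add: tens_add_l tens_add_r distrib_left distrib_right)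

lemma tens_one: "tens 1 1 = 1"
  by (metis single_one tens_single mult_1 zero_prod_def)

lemma mu_linx: "mu = linx (\<lambda>k. dl (fst k + snd k))"
  by (simp add: fun_eq_iff mu_def linx_def single_cst)

lemma islin_mu: "islin mu" by (simp add: mu_linx islin_linx)

lemma mu_tens: "mu (tens a b) = a * b"
proof -
  have "mu (tens a b) = linx (\<lambda>u. linx (\<lambda>v. mu (dl (u, v))) b) a"
    by (simp add: tens_linx islin_linx_app[OF islin_mu])
  also have "\<dots> = linx (\<lambda>u. dl u * b) a"
    by (simp add: mu_linx linx_dl dl_add linx_lmul linx_id)
  also have "\<dots> = a * b" by (simp add: linx_rmul linx_id)
  finally show ?thesis .
qed

lemma tmap_linx: "tmap A B t = linx (\<lambda>k. tens (A (dl (fst k))) (B (dl (snd k)))) t"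
  by (simp add: tmap_def linx_def dl_def)

definition hAB :: "(fa \<Rightarrow> fa) \<Rightarrow> (fa \<Rightarrow> fa) \<Rightarrow> word \<times> word \<Rightarrow> fa" where
  "hAB A B k = A (dl (fst k)) * B (dl (snd k))"

lemma conv_linx: "conv D A B x = linx (hAB A B) (D x)"
  by (simp add: conv_def tmap_linx islin_linx_app[OF islin_mu] mu_tens hAB_def[abs_def])

lemma linx_hAB_tens:
  assumes "islin A" "islin B"
  shows "linx (hAB A B) (tens a b) = A a * B b"
proof -
  have "linx (hAB A B) (tens a b) = linx (\<lambda>u. linx (\<lambda>v. hAB A B (u, v)) b) a"
    by (simp add: tens_linx islin_linx_app[OF islin_linx] linx_dl)
  also have "\<dots> = linx (\<lambda>u. A (dl u) * B b) a"
    by (simp add: hAB_def linx_lmul islinD[OF assms(2), symmetric])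
  also have "\<dots> = A a * B b"
    by (simp add: linx_rmul islinD[OF assms(1), symmetric])
  finally show ?thesis .
qed



lemma islin_eq:
  assumes "islin F1" "islin G1" "\<And>k. F1 (dl k) = G1 (dl k)"
  shows "F1 t = G1 t"
proof -
  have "F1 t = linx (\<lambda>k. F1 (dl k)) t" by (rule islinD[OF assms(1)])
  also have "\<dots> = linx (\<lambda>k. G1 (dl k)) t" using assms(3) by simp
  also have "\<dots> = G1 t" by (rule islinD[OF assms(2), symmetric])
  finally show ?thesis .
qed

lemma islinI:
  assumes "\<And>p r. Fn (p + r) = Fn p + Fn r" "\<And>k c. Fn (Poly_Mapping.single k c) = cst c * Fn (dl k)"
  shows "islin Fn"
  unfolding islin_def
proof
  fix p
  have z: "Fn 0 = 0" using assms(1)[of 0 0] by simp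
  show "Fn p = linx (\<lambda>k. Fn (dl k)) p"
    by (induction p rule: pm_induct) (simp_all add: z assms linx_add linx_single)
qed

lemma islin_lmul: "islin (\<lambda>t. X * t)" by (simp add: islin_def linx_lmul linx_id)
lemma islin_rmul: "islin (\<lambda>t. t * X)" by (simp add: islin_def linx_rmul linx_id)
lemma islin_tens_l: "islin (\<lambda>a. tens a b)" by (simp add: islin_def tens_linx linx_dl)
lemma islin_tens_r: "islin (\<lambda>b. tens a b)"
  apply (rule islinI)
   apply (rule tens_add_r)
  apply (simp add: tens_linx single_cst linx_cst linx_dl linx_lmul)
  done

definition ismul :: "(fa \<Rightarrow> 'x::monoid_mult) \<Rightarrow> bool" where
  "ismul A \<longleftrightarrow> (\<forall>u v. A (dl (u + v)) = A (dl u) * A (dl v))"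
definition isanti :: "(fa \<Rightarrow> 'x::monoid_mult) \<Rightarrow> bool" where
  "isanti A \<longleftrightarrow> (\<forall>u v. A (dl (u + v)) = A (dl v) * A (dl u))"

lemma ismul_id: "ismul id" by (simp add: ismul_def dl_add)
lemma ismul_hom: "ismul (hom_ext \<phi>)" by (simp add: ismul_def dl_add hom_mult)
lemma isanti_antihom: "isanti (antihom_ext \<phi>)" by (simp add: isanti_def dl_add antihom_mult)

lemma hAB_dl: "linx (hAB A B) (dl (u, v)) = A (dl u) * B (dl v)"
  by (simp add: linx_dl hAB_def)

lemma tens_dl: "tens (dl u) (dl v) = dl (u, v)"
  by (simp add: dl_def tens_single)

lemma L_left:
  assumes A: "islin A" "ismul A" and B: "islin B" "isanti B"
  shows "linx (hAB A B) (tens a b * t) = A a * linx (hAB A B) t * B b"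
proof -
  let ?h = "hAB A B"
  have base: "linx ?h (tens (dl u) (dl v) * dl k) = A (dl u) * linx ?h (dl k) * B (dl v)" for u v k
    using A(2) B(2) by (cases k) (simp add: tens_dl dl_add[symmetric] hAB_dl ismul_def isanti_def mult.assoc)
  have s1: "linx ?h (tens (dl u) (dl v) * t) = A (dl u) * linx ?h t * B (dl v)" for u v t
    by (rule islin_eq[of "\<lambda>t. linx ?h (tens (dl u) (dl v) * t)" "\<lambda>t. A (dl u) * linx ?h t * B (dl v)"])
       (simp_all add: base islin_comp[OF islin_lmul islin_linx] islin_comp[OF islin_linx islin_comp[OF islin_lmul islin_rmul]])
  have s2: "linx ?h (tens a (dl v) * t) = A a * linx ?h t * B (dl v)" for v t
    by (rule islin_eq[of "\<lambda>a. linx ?h (tens a (dl v) * t)" "\<lambda>a. A a * linx ?h t * B (dl v)"])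
       (simp_all add: s1 islin_comp[OF islin_comp[OF islin_tens_l islin_rmul] islin_linx] islin_comp[OF A(1) islin_comp[OF islin_rmul islin_rmul]])
  show ?thesis
    by (rule islin_eq[of "\<lambda>b. linx ?h (tens a b * t)" "\<lambda>b. A a * linx ?h t * B b"])
       (simp_all add: s2 islin_comp[OF islin_comp[OF islin_tens_r islin_rmul] islin_linx] islin_comp[OF B(1) islin_lmul])
qed

lemma L_right:
  assumes A: "islin A" "isanti A" and B: "islin B" "ismul B"
  shows "linx (hAB A B) (t * tens a b) = A a * linx (hAB A B) t * B b"
proof -
  let ?h = "hAB A B"
  have base: "linx ?h (dl k * tens (dl u) (dl v)) = A (dl u) * linx ?h (dl k) * B (dl v)" for u v k
    using A(2) B(2) by (cases k) (simp add: tens_dl dl_add[symmetric] hAB_dl ismul_def isanti_def mult.assoc)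
  have s1: "linx ?h (t * tens (dl u) (dl v)) = A (dl u) * linx ?h t * B (dl v)" for u v t
    by (rule islin_eq[of "\<lambda>t. linx ?h (t * tens (dl u) (dl v))" "\<lambda>t. A (dl u) * linx ?h t * B (dl v)"])
       (simp_all add: base islin_comp[OF islin_rmul islin_linx] islin_comp[OF islin_linx islin_comp[OF islin_lmul islin_rmul]])
  have s2: "linx ?h (t * tens a (dl v)) = A a * linx ?h t * B (dl v)" for v t
    by (rule islin_eq[of "\<lambda>a. linx ?h (t * tens a (dl v))" "\<lambda>a. A a * linx ?h t * B (dl v)"])
       (simp_all add: s1 islin_comp[OF islin_comp[OF islin_tens_l islin_lmul] islin_linx] islin_comp[OF A(1) islin_comp[OF islin_rmul islin_rmul]])
  show ?thesis
    by (rule islin_eq[of "\<lambda>b. linx ?h (t * tens a b)" "\<lambda>b. A a * linx ?h t * B b"])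
       (simp_all add: s2 islin_comp[OF islin_comp[OF islin_tens_r islin_lmul] islin_linx] islin_comp[OF B(1) islin_lmul])
qed


section \<open>Ideals and congruences\<close>

lemma id_uminus: "a \<in> ideal_gen R \<Longrightarrow> - a \<in> ideal_gen R"
  using ideal_gen.lmul[of a R "-1"] by simp
lemma id_diff: "a \<in> ideal_gen R \<Longrightarrow> b \<in> ideal_gen R \<Longrightarrow> a - b \<in> ideal_gen R"
  using ideal_gen.add[of a R "-b"] id_uminus[of b R] by simp
lemma id_linx: "(\<And>w. f w \<in> ideal_gen R) \<Longrightarrow> linx f p \<in> ideal_gen R"
  by (induction p rule: pm_induct) (auto simp: linx_add linx_single intro: ideal_gen.intros)

definition cg :: "fa set \<Rightarrow> fa \<Rightarrow> fa \<Rightarrow> bool" where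
  "cg R a b \<longleftrightarrow> a - b \<in> ideal_gen R"

locale ictx = fixes R :: "fa set"
begin

abbreviation cgR (infix "\<approx>" 50) where "a \<approx> b \<equiv> cg R a b"

lemma cg_refl[simp]: "a \<approx> a" by (simp add: cg_def ideal_gen.zero)
lemma cg_sym: "a \<approx> b \<Longrightarrow> b \<approx> a"
  unfolding cg_def using id_uminus by fastforce
lemma cg_trans[trans]: "a \<approx> b \<Longrightarrow> b \<approx> c \<Longrightarrow> a \<approx> c"
  unfolding cg_def using ideal_gen.add by fastforce
lemma cg_add: "a \<approx> a' \<Longrightarrow> b \<approx> b' \<Longrightarrow> a + b \<approx> a' + b'"
  unfolding cg_def using ideal_gen.add by (fastforce simp: algebra_simps)
lemma cg_diff: "a \<approx> a' \<Longrightarrow> b \<approx> b' \<Longrightarrow> a - b \<approx> a' - b'"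
  unfolding cg_def using id_diff by (fastforce simp: algebra_simps)
lemma cg_uminus: "a \<approx> a' \<Longrightarrow> - a \<approx> - a'"
  unfolding cg_def using id_uminus by (fastforce simp: algebra_simps)
lemma cg_lmul: "a \<approx> a' \<Longrightarrow> x * a \<approx> x * a'"
  unfolding cg_def using ideal_gen.lmul by (fastforce simp: algebra_simps)
lemma cg_rmul: "a \<approx> a' \<Longrightarrow> a * x \<approx> a' * x"
  unfolding cg_def using ideal_gen.rmul by (fastforce simp: algebra_simps)
lemma cg_mult: "a \<approx> a' \<Longrightarrow> b \<approx> b' \<Longrightarrow> a * b \<approx> a' * b'"
  by (meson cg_lmul cg_rmul cg_trans)
lemma cg_ctx: "a \<approx> a' \<Longrightarrow> x * a * y \<approx> x * a' * y"
  by (simp add: cg_lmul cg_rmul)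
lemma cg_base: "r \<in> R \<Longrightarrow> r \<approx> 0" by (simp add: cg_def ideal_gen.base)
lemma cg_zero_iff: "a \<approx> 0 \<longleftrightarrow> a \<in> ideal_gen R" by (simp add: cg_def)
lemma cg_eq: "a = b \<Longrightarrow> a \<approx> b" by simp

lemma cg_linx: "(\<And>k. f k \<approx> g k) \<Longrightarrow> linx f p \<approx> linx g p"
proof -
  assume "\<And>k. f k \<approx> g k"
  then have "linx (\<lambda>k. f k - g k) p \<in> ideal_gen R" by (intro id_linx) (simp add: cg_def)
  moreover have "linx (\<lambda>k. f k - g k) p = linx f p - linx g p"
    by (induction p rule: pm_induct) (simp_all add: linx_add linx_single right_diff_distrib)
  ultimately show ?thesis by (simp add: cg_def)
qed

lemma cg_islin:
  assumes "islin F1" "islin G1" "\<And>k. F1 (dl k) \<approx> G1 (dl k)"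
  shows "F1 t \<approx> G1 t"
  using cg_linx[of "\<lambda>k. F1 (dl k)" "\<lambda>k. G1 (dl k)" t, OF assms(3)]
  by (simp add: islinD[OF assms(1), symmetric] islinD[OF assms(2), symmetric])

definition cent :: "fa \<Rightarrow> bool" where "cent z \<longleftrightarrow> (\<forall>y. z * y \<approx> y * z)"

lemma centD: "cent z \<Longrightarrow> z * y \<approx> y * z" by (simp add: cent_def)

lemma cent_mult: "cent a \<Longrightarrow> cent b \<Longrightarrow> cent (a * b)"
  unfolding cent_def
proof
  fix y assume a: "\<forall>y. a * y \<approx> y * a" and b: "\<forall>y. b * y \<approx> y * b"
  have "a * b * y = a * (b * y)" by (simp add: mult.assoc)
  also have "\<dots> \<approx> a * (y * b)" using b by (simp add: cg_lmul)
  also have "a * (y * b) = (a * y) * b" by (simp add: mult.assoc)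
  also have "\<dots> \<approx> (y * a) * b" using a by (simp add: cg_rmul)
  finally show "a * b * y \<approx> y * (a * b)" by (simp add: mult.assoc)
qed

lemma cent_one: "cent 1" by (simp add: cent_def)
lemma cent_cst: "cent (cst c)" by (simp add: cent_def cst_central)
lemma cent_cong: "cent a \<Longrightarrow> a \<approx> b \<Longrightarrow> cent b"
  unfolding cent_def by (meson cg_lmul cg_rmul cg_sym cg_trans)

lemma cent_gen:
  assumes "\<And>g. z * gn g \<approx> gn g * z"
  shows "cent z"
  unfolding cent_def
proof
  fix y
  have w: "z * dl (Wd xs) \<approx> dl (Wd xs) * z" for xs
  proof (induction xs)
    case Nil then show ?case by (simp add: zero_word_def[symmetric] dl_zero)
  next
    case (Cons g xs)
    have dd: "dl (Wd (g # xs)) = gn g * dl (Wd xs)"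
      using Wd_append[of "[g]" xs] by (simp add: gn_def dl_def mult_single)
    have "z * (gn g * dl (Wd xs)) = (z * gn g) * dl (Wd xs)" by (simp add: mult.assoc)
    also have "\<dots> \<approx> (gn g * z) * dl (Wd xs)" by (rule cg_rmul[OF assms])
    also have "(gn g * z) * dl (Wd xs) = gn g * (z * dl (Wd xs))" by (simp add: mult.assoc)
    also have "\<dots> \<approx> gn g * (dl (Wd xs) * z)" by (rule cg_lmul[OF Cons])
    finally show ?case by (simp add: dd mult.assoc)
  qed
  show "z * y \<approx> y * z"
    by (rule cg_islin[OF islin_lmul islin_rmul]) (metis letters.cases w)
qed


lemma GL:
  assumes A: "islin A" "ismul A" and B: "islin B" "isanti B"
    and ht: "linx (hAB A B) t \<approx> Z" and cz: "cent Z"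
  shows "linx (hAB A B) (D * t) \<approx> linx (hAB A B) D * Z"
proof (rule cg_islin[of "\<lambda>D. linx (hAB A B) (D * t)" "\<lambda>D. linx (hAB A B) D * Z"])
  show "islin (\<lambda>D. linx (hAB A B) (D * t))" by (rule islin_comp[OF islin_rmul islin_linx])
  show "islin (\<lambda>D. linx (hAB A B) D * Z)" by (rule islin_comp[OF islin_linx islin_rmul])
  fix k :: "word \<times> word"
  obtain u v where k: "k = (u, v)" by (cases k)
  have "linx (hAB A B) (tens (dl u) (dl v) * t) = A (dl u) * linx (hAB A B) t * B (dl v)"
    by (rule L_left[OF A B])
  also have "\<dots> \<approx> A (dl u) * Z * B (dl v)" by (rule cg_ctx[OF ht])
  also have "A (dl u) * Z * B (dl v) = A (dl u) * (Z * B (dl v))" by (simp add: mult.assoc)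
  also have "\<dots> \<approx> A (dl u) * (B (dl v) * Z)" by (rule cg_lmul[OF centD[OF cz]])
  finally show "linx (hAB A B) (dl k * t) \<approx> linx (hAB A B) (dl k) * Z"
    by (simp add: k tens_dl hAB_dl mult.assoc)
qed

lemma GR:
  assumes A: "islin A" "isanti A" and B: "islin B" "ismul B"
    and ht: "linx (hAB A B) t \<approx> Z" and cz: "cent Z"
  shows "linx (hAB A B) (t * D) \<approx> Z * linx (hAB A B) D"
proof (rule cg_islin[of "\<lambda>D. linx (hAB A B) (t * D)" "\<lambda>D. Z * linx (hAB A B) D"])
  show "islin (\<lambda>D. linx (hAB A B) (t * D))" by (rule islin_comp[OF islin_lmul islin_linx])
  show "islin (\<lambda>D. Z * linx (hAB A B) D)" by (rule islin_comp[OF islin_linx islin_lmul])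
  fix k :: "word \<times> word"
  obtain u v where k: "k = (u, v)" by (cases k)
  have "linx (hAB A B) (t * tens (dl u) (dl v)) = A (dl u) * linx (hAB A B) t * B (dl v)"
    by (rule L_right[OF A B])
  also have "\<dots> \<approx> A (dl u) * Z * B (dl v)" by (rule cg_ctx[OF ht])
  also have "\<dots> \<approx> Z * A (dl u) * B (dl v)" by (rule cg_rmul[OF cg_sym[OF centD[OF cz]]])
  finally show "linx (hAB A B) (t * dl k) \<approx> Z * linx (hAB A B) (dl k)"
    by (simp add: k tens_dl hAB_dl mult.assoc)
qed

lemma Lmc:
  assumes P: "islin P" "ismul P" "\<And>u. cent (P (dl u))" and Q: "islin Q" "ismul Q"
  shows "linx (hAB P Q) (s * t) \<approx> linx (hAB P Q) s * linx (hAB P Q) t"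
proof -
  let ?h = "hAB P Q"
  have base: "linx ?h (dl m * dl n) \<approx> linx ?h (dl m) * linx ?h (dl n)" for m n
  proof -
    obtain m1 m2 n1 n2 where mn: "m = (m1, m2)" "n = (n1, n2)" by (cases m, cases n)
    have "linx ?h (dl m * dl n) = P (dl m1) * (P (dl n1) * Q (dl m2)) * Q (dl n2)"
      using P(2) Q(2) by (simp add: mn dl_add[symmetric] hAB_dl ismul_def mult.assoc)
    also have "\<dots> \<approx> P (dl m1) * (Q (dl m2) * P (dl n1)) * Q (dl n2)"
      by (rule cg_ctx[OF centD[OF P(3)]])
    finally show ?thesis by (simp add: mn hAB_dl mult.assoc)
  qed
  have s1: "linx ?h (dl m * t) \<approx> linx ?h (dl m) * linx ?h t" for m t
    by (rule cg_islin[of "\<lambda>t. linx ?h (dl m * t)" "\<lambda>t. linx ?h (dl m) * linx ?h t"])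
       (simp_all add: base islin_comp[OF islin_lmul islin_linx] islin_comp[OF islin_linx islin_lmul])
  show ?thesis
    by (rule cg_islin[of "\<lambda>s. linx ?h (s * t)" "\<lambda>s. linx ?h s * linx ?h t"])
       (simp_all add: s1 islin_comp[OF islin_rmul islin_linx] islin_comp[OF islin_linx islin_rmul])
qed

lemma Lac:
  assumes P: "islin P" "ismul P" "\<And>u. cent (P (dl u))" and Q: "islin Q" "isanti Q"
  shows "linx (hAB P Q) (s * t) \<approx> linx (hAB P Q) t * linx (hAB P Q) s"
proof -
  let ?h = "hAB P Q"
  have base: "linx ?h (dl m * dl n) \<approx> linx ?h (dl n) * linx ?h (dl m)" for m n
  proof -
    obtain m1 m2 n1 n2 where mn: "m = (m1, m2)" "n = (n1, n2)" by (cases m, cases n)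
    have "linx ?h (dl m * dl n) = P (dl m1) * (P (dl n1) * Q (dl n2)) * Q (dl m2)"
      using P(2) Q(2) by (simp add: mn dl_add[symmetric] hAB_dl ismul_def isanti_def mult.assoc)
    also have "\<dots> \<approx> (P (dl n1) * Q (dl n2)) * P (dl m1) * Q (dl m2)"
      by (rule cg_rmul[OF centD[OF P(3)]])
    finally show ?thesis by (simp add: mn hAB_dl mult.assoc)
  qed
  have s1: "linx ?h (dl m * t) \<approx> linx ?h t * linx ?h (dl m)" for m t
    by (rule cg_islin[of "\<lambda>t. linx ?h (dl m * t)" "\<lambda>t. linx ?h t * linx ?h (dl m)"])
       (simp_all add: base islin_comp[OF islin_lmul islin_linx] islin_comp[OF islin_linx islin_rmul])
  show ?thesis
    by (rule cg_islin[of "\<lambda>s. linx ?h (s * t)" "\<lambda>s. linx ?h t * linx ?h s"])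
       (simp_all add: s1 islin_comp[OF islin_rmul islin_linx] islin_comp[OF islin_linx islin_lmul])
qed

end



lemma islin_T: "islin antipode" by (simp add: antipode_def islin_antihom)
lemma isanti_T: "isanti antipode" by (simp add: antipode_def isanti_antihom)
lemma T_mult: "antipode (a * b) = antipode b * antipode a" by (simp add: antipode_def antihom_mult)
lemma T_gn[simp]: "antipode (gn g) = S_gen g" by (simp add: antipode_def antihom_gn)
lemma T_one[simp]: "antipode 1 = 1" by (simp add: antipode_def antihom_one)
lemma T_cst[simp]: "antipode (cst c) = cst c" by (simp add: antipode_def antihom_cst)
lemma T_add: "antipode (a + b) = antipode a + antipode b" by (rule islin_add[OF islin_T])
lemma T_diff: "antipode (a - b) = antipode a - antipode b" by (rule islin_diff[OF islin_T])
lemma T_uminus: "antipode (- a) = - antipode a" by (rule islin_uminus[OF islin_T])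
lemmas T_simps = T_mult T_add T_diff T_uminus

lemma islin_Dn: "islin Delta_norm" by (simp add: Delta_norm_def islin_hom)
lemma ismul_Dn: "Delta_norm (a * b) = Delta_norm a * Delta_norm b" by (simp add: Delta_norm_def hom_mult)
lemma Dn_gn: "Delta_norm (gn g) = delta_norm_gen g" by (simp add: Delta_norm_def hom_gn)
lemma Dn_one: "Delta_norm 1 = tens 1 1" by (simp add: Delta_norm_def hom_one tens_one)
lemma islin_Dt: "islin Delta_twist" by (simp add: Delta_twist_def islin_hom)
lemma ismul_Dt: "Delta_twist (a * b) = Delta_twist a * Delta_twist b" by (simp add: Delta_twist_def hom_mult)
lemma Dt_gn: "Delta_twist (gn g) = delta_twist_gen g" by (simp add: Delta_twist_def hom_gn)
lemma Dt_one: "Delta_twist 1 = tens 1 1" by (simp add: Delta_twist_def hom_one tens_one)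

lemma dl_Nil: "dl (Wd []) = 1" by (simp add: zero_word_def[symmetric] dl_zero)
lemma dl_Cons: "dl (Wd (g # xs)) = gn g * dl (Wd xs)"
  using Wd_append[of "[g]" xs] by (simp add: gn_def dl_def mult_single)
lemma dl_snoc: "dl (Wd (xs @ [g])) = dl (Wd xs) * gn g"
  using Wd_append[of xs "[g]"] by (simp add: gn_def dl_def mult_single)

lemma eta_eps_linx: "eta (eps x) = linx (\<lambda>w. cst (prod_list (map eps_gen (letters w)))) x"
  by (simp add: eta_def eps_def counit_ext_def linx_def cst_sum cst_mult)
lemma islin_etaeps: "islin (\<lambda>x. eta (eps x))" by (simp add: eta_eps_linx islin_linx)
lemma etaeps_dl: "eta (eps (dl (Wd xs))) = cst (prod_list (map eps_gen xs))"
  by (simp add: eta_eps_linx linx_dl)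

lemma islin_conv: "islin D \<Longrightarrow> islin (conv D A B)"
  unfolding conv_linx[abs_def] by (rule islin_comp[OF _ islin_linx])

definition ee :: fa where "ee = K * Kb"
definition ff :: fa where "ff = L * Lb"

fun chi_gen :: "gen \<Rightarrow> fa" where
  "chi_gen GK = ee" | "chi_gen GKb = ee" | "chi_gen GL = ff" | "chi_gen GLb = ff"
| "chi_gen GE = 0" | "chi_gen GF = 0"

definition chi :: "fa \<Rightarrow> fa" where "chi = hom_ext chi_gen"

lemma islin_chi: "islin chi" by (simp add: chi_def islin_hom)
lemma ismul_chi: "ismul chi" by (simp add: chi_def ismul_hom)
lemma chi_gn[simp]: "chi (gn g) = chi_gen g" by (simp add: chi_def hom_gn)
lemma chi_one[simp]: "chi 1 = 1" by (simp add: chi_def hom_one)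
lemma chi_mult: "chi (a * b) = chi a * chi b" by (simp add: chi_def hom_mult)
lemma chi_add: "chi (a + b) = chi a + chi b" by (rule islin_add[OF islin_chi])

lemma cgI: "a - b \<in> ideal_gen R \<Longrightarrow> cg R a b" by (simp add: cg_def)

context ictx begin
lemma cg_stepL: "a \<approx> b \<Longrightarrow> u = x * a \<Longrightarrow> v = x * b \<Longrightarrow> u \<approx> v" by (simp add: cg_lmul)
lemma cg_stepR: "a \<approx> b \<Longrightarrow> u = a * y \<Longrightarrow> v = b * y \<Longrightarrow> u \<approx> v" by (simp add: cg_rmul)
lemma cg_step: "a \<approx> b \<Longrightarrow> u = x * a * y \<Longrightarrow> v = x * b * y \<Longrightarrow> u \<approx> v" by (simp add: cg_ctx)
lemma cg_eqr: "a \<approx> b \<Longrightarrow> b = c \<Longrightarrow> a \<approx> c" by simp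
lemma cg_eql: "a = b \<Longrightarrow> b \<approx> c \<Longrightarrow> a \<approx> c" by simp
lemma cent_zero: "cent 0" by (simp add: cent_def)
end

locale ualg = ictx + fixes q :: complex
  assumes q0: "q \<noteq> 0" and cr: "common_rels q \<subseteq> R"
begin

lemma crel: "x \<in> common_rels q \<Longrightarrow> x \<approx> 0" using cr by (auto intro: cg_base)
lemma crel': "x - y \<in> common_rels q \<Longrightarrow> x \<approx> y" using crel[of "x - y"] by (simp add: cg_def)

lemma r1: "K * Kb * K \<approx> K" by (rule crel') (simp add: common_rels_def)
lemma r2: "Kb * K * Kb \<approx> Kb" by (rule crel') (simp add: common_rels_def)
lemma r3: "K * Kb \<approx> Kb * K" by (rule crel') (simp add: common_rels_def)
lemma r4: "L * Lb * L \<approx> L" by (rule crel') (simp add: common_rels_def)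
lemma r5: "Lb * L * Lb \<approx> Lb" by (rule crel') (simp add: common_rels_def)
lemma r6: "L * Lb \<approx> Lb * L" by (rule crel') (simp add: common_rels_def)
lemma r7: "ee + ff \<approx> 1" unfolding ee_def ff_def by (rule crel') (simp add: common_rels_def)
lemma r8: "E * F - F * E \<approx> cst (1 / (q - inverse q)) * ((K + L) - (Kb + Lb))"
  by (rule crel') (simp add: common_rels_def)

lemma KbK: "Kb * K \<approx> ee" unfolding ee_def by (rule cg_sym[OF r3])
lemma LbL: "Lb * L \<approx> ff" unfolding ff_def by (rule cg_sym[OF r6])

lemma eK: "ee * K \<approx> K" unfolding ee_def by (rule r1)
lemma fL: "ff * L \<approx> L" unfolding ff_def by (rule r4)
lemma Kbe: "Kb * ee \<approx> Kb" unfolding ee_def using r2 by (simp add: mult.assoc)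
lemma Lbf: "Lb * ff \<approx> Lb" unfolding ff_def using r5 by (simp add: mult.assoc)
lemma Ke: "K * ee \<approx> K"
proof -
  have "K * ee \<approx> K * (Kb * K)" unfolding ee_def by (rule cg_lmul[OF r3])
  also have "\<dots> = K * Kb * K" by (simp add: mult.assoc)
  also have "\<dots> \<approx> K" by (rule r1)
  finally show ?thesis .
qed
lemma Lf: "L * ff \<approx> L"
proof -
  have "L * ff \<approx> L * (Lb * L)" unfolding ff_def by (rule cg_lmul[OF r6])
  also have "\<dots> = L * Lb * L" by (simp add: mult.assoc)
  also have "\<dots> \<approx> L" by (rule r4)
  finally show ?thesis .
qed
lemma eKb: "ee * Kb \<approx> Kb"
proof -
  have "ee * Kb \<approx> (Kb * K) * Kb" unfolding ee_def by (rule cg_rmul[OF r3])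
  also have "\<dots> \<approx> Kb" by (rule r2)
  finally show ?thesis .
qed
lemma fLb: "ff * Lb \<approx> Lb"
proof -
  have "ff * Lb \<approx> (Lb * L) * Lb" unfolding ff_def by (rule cg_rmul[OF r6])
  also have "\<dots> \<approx> Lb" by (rule r5)
  finally show ?thesis .
qed

lemma ee_idem: "ee * ee \<approx> ee"
  by (rule cg_stepR[OF eK, of _ Kb]) (simp_all add: ee_def mult.assoc)
lemma ff_idem: "ff * ff \<approx> ff"
  by (rule cg_stepR[OF fL, of _ Lb]) (simp_all add: ff_def mult.assoc)
lemma f_eq: "ff \<approx> 1 - ee"
proof -
  have "ee + ff - ee \<approx> 1 - ee" by (rule cg_diff[OF r7 cg_refl])
  then show ?thesis by simp
qed
lemma e_eq: "ee \<approx> 1 - ff"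
proof -
  have "ee + ff - ff \<approx> 1 - ff" by (rule cg_diff[OF r7 cg_refl])
  then show ?thesis by simp
qed
lemma ef: "ee * ff \<approx> 0"
proof -
  have "ee * ff \<approx> ee * (1 - ee)" by (rule cg_lmul[OF f_eq])
  also have "\<dots> = ee - ee * ee" by (simp add: algebra_simps)
  also have "\<dots> \<approx> ee - ee" by (rule cg_diff[OF cg_refl ee_idem])
  finally show ?thesis by simp
qed
lemma fe: "ff * ee \<approx> 0"
proof -
  have "ff * ee \<approx> ff * (1 - ff)" by (rule cg_lmul[OF e_eq])
  also have "\<dots> = ff - ff * ff" by (simp add: algebra_simps)
  also have "\<dots> \<approx> ff - ff" by (rule cg_diff[OF cg_refl ff_idem])
  finally show ?thesis by simp
qed

lemma cross1: "X * ee \<approx> X \<Longrightarrow> ff * Y \<approx> Y \<Longrightarrow> X * Y \<approx> 0"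
proof -
  assume x: "X * ee \<approx> X" and y: "ff * Y \<approx> Y"
  have "X * Y \<approx> (X * ee) * Y" by (rule cg_rmul[OF cg_sym[OF x]])
  also have "\<dots> \<approx> (X * ee) * (ff * Y)" by (rule cg_lmul[OF cg_sym[OF y]])
  also have "\<dots> = X * (ee * ff) * Y" by (simp add: mult.assoc)
  also have "\<dots> \<approx> X * 0 * Y" by (rule cg_ctx[OF ef])
  finally show ?thesis by simp
qed
lemma cross2: "X * ff \<approx> X \<Longrightarrow> ee * Y \<approx> Y \<Longrightarrow> X * Y \<approx> 0"
proof -
  assume x: "X * ff \<approx> X" and y: "ee * Y \<approx> Y"
  have "X * Y \<approx> (X * ff) * Y" by (rule cg_rmul[OF cg_sym[OF x]])
  also have "\<dots> \<approx> (X * ff) * (ee * Y)" by (rule cg_lmul[OF cg_sym[OF y]])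
  also have "\<dots> = X * (ff * ee) * Y" by (simp add: mult.assoc)
  also have "\<dots> \<approx> X * 0 * Y" by (rule cg_ctx[OF fe])
  finally show ?thesis by simp
qed

lemma fee: "ff * ee \<approx> 0" by (rule fe)
lemmas idems = Ke Kbe Lf Lbf eK eKb fL fLb ee_idem ff_idem
lemma KL: "K * L \<approx> 0" by (rule cross1[OF Ke fL])
lemma KLb: "K * Lb \<approx> 0" by (rule cross1[OF Ke fLb])
lemma KbL: "Kb * L \<approx> 0" by (rule cross1[OF Kbe fL])
lemma KbLb: "Kb * Lb \<approx> 0" by (rule cross1[OF Kbe fLb])
lemma LK: "L * K \<approx> 0" by (rule cross2[OF Lf eK])
lemma LKb: "L * Kb \<approx> 0" by (rule cross2[OF Lf eKb])
lemma LbK: "Lb * K \<approx> 0" by (rule cross2[OF Lbf eK])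
lemma LbKb: "Lb * Kb \<approx> 0" by (rule cross2[OF Lbf eKb])
lemma eL: "ee * L \<approx> 0" by (rule cross1[OF ee_idem fL])
lemma eLb: "ee * Lb \<approx> 0" by (rule cross1[OF ee_idem fLb])
lemma fK: "ff * K \<approx> 0" by (rule cross2[OF ff_idem eK])
lemma fKb: "ff * Kb \<approx> 0" by (rule cross2[OF ff_idem eKb])
lemma Le: "L * ee \<approx> 0" by (rule cross2[OF Lf ee_idem])
lemma Lbe: "Lb * ee \<approx> 0" by (rule cross2[OF Lbf ee_idem])
lemma Kf: "K * ff \<approx> 0" by (rule cross1[OF Ke ff_idem])
lemma Kbf: "Kb * ff \<approx> 0" by (rule cross1[OF Kbe ff_idem])

lemma WV: "(Kb + Lb) * (K + L) \<approx> 1"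
proof -
  have "(Kb + Lb) * (K + L) = Kb * K + Kb * L + Lb * K + Lb * L" by (simp add: algebra_simps)
  also have "\<dots> \<approx> ee + 0 + 0 + ff" by (intro cg_add KbK KbL LbK LbL)
  also have "ee + 0 + 0 + ff \<approx> 1" using r7 by simp
  finally show ?thesis .
qed
lemma VW: "(K + L) * (Kb + Lb) \<approx> 1"
proof -
  have "(K + L) * (Kb + Lb) = K * Kb + K * Lb + L * Kb + L * Lb" by (simp add: algebra_simps)
  also have "\<dots> \<approx> ee + 0 + 0 + ff" unfolding ee_def ff_def by (intro cg_add cg_refl KLb LKb)
  also have "ee + 0 + 0 + ff \<approx> 1" using r7 by simp
  finally show ?thesis .
qed

end



context ualg begin

abbreviation "hTI \<equiv> hAB antipode id"
abbreviation "hIT \<equiv> hAB id antipode"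
lemmas evT = linx_add linx_hAB_tens[OF islin_T islin_id] linx_hAB_tens[OF islin_id islin_T]
   tens_add_l tens_add_r T_simps

lemma GRt: "linx hTI (delta_twist_gen g) \<approx> cst (eps_gen g)"
proof (cases g)
  case GK
  have "linx hTI (delta_twist_gen g) = Kb * K + Lb * L" by (simp add: GK evT)
  also have "\<dots> \<approx> ee + ff" by (intro cg_add KbK LbL)
  also have "\<dots> \<approx> 1" by (rule r7)
  finally show ?thesis by (simp add: GK)
next
  case GKb
  have "linx hTI (delta_twist_gen g) = ee + ff" by (simp add: GKb evT ee_def ff_def)
  also have "\<dots> \<approx> 1" by (rule r7)
  finally show ?thesis by (simp add: GKb)
next
  case GL
  have "linx hTI (delta_twist_gen g) = Lb * K + Kb * L" by (simp add: GL evT)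
  also have "\<dots> \<approx> 0 + 0" by (intro cg_add LbK KbL)
  finally show ?thesis by (simp add: GL)
next
  case GLb
  have "linx hTI (delta_twist_gen g) = L * Kb + K * Lb" by (simp add: GLb evT)
  also have "\<dots> \<approx> 0 + 0" by (intro cg_add LKb KLb)
  finally show ?thesis by (simp add: GLb)
next
  case GE
  have "linx hTI (delta_twist_gen g) = E - E * ((Kb + Lb) * (K + L))" by (simp add: GE evT algebra_simps)
  also have "\<dots> \<approx> E - E * 1" by (intro cg_diff cg_refl cg_lmul WV)
  finally show ?thesis by (simp add: GE)
next
  case GF
  have "linx hTI (delta_twist_gen g) = 0" by (simp add: GF evT algebra_simps)
  then show ?thesis by (simp add: GF)
qed

lemma GLt: "linx hIT (delta_twist_gen g) \<approx> cst (eps_gen g)"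
proof (cases g)
  case GK
  have "linx hIT (delta_twist_gen g) = ee + ff" by (simp add: GK evT ee_def ff_def)
  also have "\<dots> \<approx> 1" by (rule r7)
  finally show ?thesis by (simp add: GK)
next
  case GKb
  have "linx hIT (delta_twist_gen g) = Kb * K + Lb * L" by (simp add: GKb evT)
  also have "\<dots> \<approx> ee + ff" by (intro cg_add KbK LbL)
  also have "\<dots> \<approx> 1" by (rule r7)
  finally show ?thesis by (simp add: GKb)
next
  case GL
  have "linx hIT (delta_twist_gen g) = L * Kb + K * Lb" by (simp add: GL evT)
  also have "\<dots> \<approx> 0 + 0" by (intro cg_add LKb KLb)
  finally show ?thesis by (simp add: GL)
next
  case GLb
  have "linx hIT (delta_twist_gen g) = Lb * K + Kb * L" by (simp add: GLb evT)
  also have "\<dots> \<approx> 0 + 0" by (intro cg_add LbK KbL)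
  finally show ?thesis by (simp add: GLb)
next
  case GE
  have "linx hIT (delta_twist_gen g) = 0" by (simp add: GE evT algebra_simps)
  then show ?thesis by (simp add: GE)
next
  case GF
  have "linx hIT (delta_twist_gen g) = F - ((Kb + Lb) * (K + L)) * F" by (simp add: GF evT algebra_simps)
  also have "\<dots> \<approx> F - 1 * F" by (intro cg_diff cg_refl cg_rmul WV)
  finally show ?thesis by (simp add: GF)
qed

lemma twist_SI_dl: "conv Delta_twist antipode id (dl (Wd xs)) \<approx> cst (prod_list (map eps_gen xs))"
proof (induction xs rule: rev_induct)
  case Nil
  have "linx hTI (tens 1 1) = 1" by (simp only: linx_hAB_tens[OF islin_T islin_id] T_one id_apply mult_1)
  then show ?case unfolding conv_linx dl_Nil Dt_one by simp
next
  case (snoc g xs)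
  let ?t = "Delta_twist (dl (Wd xs))"
  have "conv Delta_twist antipode id (dl (Wd (xs @ [g]))) = linx hTI (?t * delta_twist_gen g)"
    by (simp add: conv_linx dl_snoc ismul_Dt Dt_gn)
  also have "\<dots> \<approx> cst (prod_list (map eps_gen xs)) * linx hTI (delta_twist_gen g)"
    using snoc unfolding conv_linx by (rule GR[OF islin_T isanti_T islin_id ismul_id _ cent_cst])
  also have "\<dots> \<approx> cst (prod_list (map eps_gen xs)) * cst (eps_gen g)" by (rule cg_lmul[OF GRt])
  finally show ?case by (simp only: cst_mult map_append prod_list.append list.map prod_list.Cons prod_list.Nil mult_1_right)
qed

lemma twist_IS_dl: "conv Delta_twist id antipode (dl (Wd xs)) \<approx> cst (prod_list (map eps_gen xs))"
proof (induction xs)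
  case Nil
  have "linx hIT (tens 1 1) = 1" by (simp only: linx_hAB_tens[OF islin_id islin_T] T_one id_apply mult_1)
  then show ?case unfolding conv_linx dl_Nil Dt_one by simp
next
  case (Cons g xs)
  let ?t = "Delta_twist (dl (Wd xs))"
  have "conv Delta_twist id antipode (dl (Wd (g # xs))) = linx hIT (delta_twist_gen g * ?t)"
    by (simp add: conv_linx dl_Cons ismul_Dt Dt_gn)
  also have "\<dots> \<approx> linx hIT (delta_twist_gen g) * cst (prod_list (map eps_gen xs))"
    using Cons unfolding conv_linx by (rule GL[OF islin_id ismul_id islin_T isanti_T _ cent_cst])
  also have "\<dots> \<approx> cst (eps_gen g) * cst (prod_list (map eps_gen xs))" by (rule cg_rmul[OF GLt])
  finally show ?case by (simp only: cst_mult map_append prod_list.append list.map prod_list.Cons prod_list.Nil mult_1_right)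
qed

lemma twist_SI: "conv Delta_twist antipode id x \<approx> eta (eps x)"
  by (rule cg_islin[OF islin_conv[OF islin_Dt] islin_etaeps])
     (metis letters.cases twist_SI_dl etaeps_dl)
lemma twist_IS: "conv Delta_twist id antipode x \<approx> eta (eps x)"
  by (rule cg_islin[OF islin_conv[OF islin_Dt] islin_etaeps])
     (metis letters.cases twist_IS_dl etaeps_dl)

end


context ualg begin
lemma comm2:
  assumes x: "X * G \<approx> cst a * (G * X')" and y: "Y * G \<approx> cst b * (G * Y')" and ab: "b * a = 1"
  shows "X * Y * G \<approx> G * (X' * Y')"
proof -
  have "X * Y * G = X * (Y * G)" by (simp add: mult.assoc)
  also have "\<dots> \<approx> X * (cst b * (G * Y'))" by (rule cg_lmul[OF y])
  also have "\<dots> = cst b * ((X * G) * Y')" by (simp add: cst_left mult.assoc)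
  also have "\<dots> \<approx> cst b * ((cst a * (G * X')) * Y')" by (rule cg_lmul[OF cg_rmul[OF x]])
  also have "\<dots> = cst (b * a) * (G * (X' * Y'))" by (simp add: mult.assoc cst_cst)
  finally show ?thesis by (simp add: ab)
qed
end

locale unorm = ualg + assumes nr: "norm_rels q \<subseteq> R"
begin

lemma nrel': "x - y \<in> norm_rels q \<Longrightarrow> x \<approx> y" using nr by (auto intro: cg_base simp: cg_def ideal_gen.base)

lemma n1: "K * E \<approx> cst (q^2) * (E * K)"
  using nrel'[of "K * E" "cst (q^2) * E * K"] by (simp add: norm_rels_def mult.assoc)
lemma n2: "L * E \<approx> cst (q^2) * (E * L)"
  using nrel'[of "L * E" "cst (q^2) * E * L"] by (simp add: norm_rels_def mult.assoc)
lemma n3: "Kb * E \<approx> cst (inverse (q^2)) * (E * Kb)"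
  using nrel'[of "Kb * E" "cst (inverse (q^2)) * E * Kb"] by (simp add: norm_rels_def mult.assoc)
lemma n4: "Lb * E \<approx> cst (inverse (q^2)) * (E * Lb)"
  using nrel'[of "Lb * E" "cst (inverse (q^2)) * E * Lb"] by (simp add: norm_rels_def mult.assoc)
lemma n5: "K * F \<approx> cst (inverse (q^2)) * (F * K)"
  using nrel'[of "K * F" "cst (inverse (q^2)) * F * K"] by (simp add: norm_rels_def mult.assoc)
lemma n6: "L * F \<approx> cst (inverse (q^2)) * (F * L)"
  using nrel'[of "L * F" "cst (inverse (q^2)) * F * L"] by (simp add: norm_rels_def mult.assoc)
lemma n7: "Kb * F \<approx> cst (q^2) * (F * Kb)"
  using nrel'[of "Kb * F" "cst (q^2) * F * Kb"] by (simp add: norm_rels_def mult.assoc)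
lemma n8: "Lb * F \<approx> cst (q^2) * (F * Lb)"
  using nrel'[of "Lb * F" "cst (q^2) * F * Lb"] by (simp add: norm_rels_def mult.assoc)

lemma qq1: "inverse (q^2) * q^2 = 1" using q0 by simp
lemma qq2: "q^2 * inverse (q^2) = 1" using q0 by simp

lemma cent_ee: "cent ee"
proof (rule cent_gen)
  fix g show "ee * gn g \<approx> gn g * ee"
  proof (cases g)
    case GK then show ?thesis using cg_trans[OF eK cg_sym[OF Ke]] by simp
  next
    case GKb then show ?thesis using cg_trans[OF eKb cg_sym[OF Kbe]] by simp
  next
    case GL then show ?thesis using cg_trans[OF eL cg_sym[OF Le]] by simp
  next
    case GLb then show ?thesis using cg_trans[OF eLb cg_sym[OF Lbe]] by simp
  next
    case GE then show ?thesis using comm2[OF n1 n3 qq1] by (simp add: ee_def)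
  next
    case GF then show ?thesis using comm2[OF n5 n7 qq2] by (simp add: ee_def)
  qed
qed

lemma cent_ff: "cent ff"
proof (rule cent_gen)
  fix g show "ff * gn g \<approx> gn g * ff"
  proof (cases g)
    case GK then show ?thesis using cg_trans[OF fK cg_sym[OF Kf]] by simp
  next
    case GKb then show ?thesis using cg_trans[OF fKb cg_sym[OF Kbf]] by simp
  next
    case GL then show ?thesis using cg_trans[OF fL cg_sym[OF Lf]] by simp
  next
    case GLb then show ?thesis using cg_trans[OF fLb cg_sym[OF Lbf]] by simp
  next
    case GE then show ?thesis using comm2[OF n2 n4 qq1] by (simp add: ff_def)
  next
    case GF then show ?thesis using comm2[OF n6 n8 qq2] by (simp add: ff_def)
  qed
qed

lemma cent_chi: "cent (chi (dl u))"
proof -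
  have "cent (prod_list (map chi_gen xs))" for xs
  proof (induction xs)
    case Nil then show ?case by (simp add: cent_one)
  next
    case (Cons g xs)
    have "cent (chi_gen g)" by (cases g) (simp_all add: cent_ee cent_ff cent_zero)
    then show ?case using Cons by (simp add: cent_mult)
  qed
  then show ?thesis by (simp add: chi_def hom_dl)
qed

lemmas evC = evT linx_hAB_tens[OF islin_chi islin_id] linx_hAB_tens[OF islin_chi islin_T] chi_add

lemma GLn: "linx hIT (delta_norm_gen g) \<approx> chi_gen g"
proof (cases g)
  case GK
  show ?thesis by (simp add: GK evT ee_def)
next
  case GKb
  have "linx hIT (delta_norm_gen g) = Kb * K" by (simp add: GKb evT)
  then show ?thesis using KbK by (simp add: GKb)
next
  case GL
  have "linx hIT (delta_norm_gen g) = L * Lb + L * Kb + K * Lb" by (simp add: GL evT)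
  also have "\<dots> \<approx> ff + 0 + 0" unfolding ff_def by (intro cg_add cg_refl LKb KLb)
  finally show ?thesis by (simp add: GL)
next
  case GLb
  have "linx hIT (delta_norm_gen g) = Lb * L + Lb * K + Kb * L" by (simp add: GLb evT)
  also have "\<dots> \<approx> ff + 0 + 0" by (intro cg_add LbL LbK KbL)
  finally show ?thesis by (simp add: GLb)
next
  case GE
  have "linx hIT (delta_norm_gen g) = 0" by (simp add: GE evT algebra_simps)
  then show ?thesis by (simp add: GE)
next
  case GF
  have "linx hIT (delta_norm_gen g) = F - ((Kb + Lb) * (K + L)) * F" by (simp add: GF evT algebra_simps)
  also have "\<dots> \<approx> F - 1 * F" by (intro cg_diff cg_refl cg_rmul WV)
  finally show ?thesis by (simp add: GF)
qed

lemma GRn: "linx hTI (delta_norm_gen g) \<approx> chi_gen g"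
proof (cases g)
  case GK
  have "linx hTI (delta_norm_gen g) = Kb * K" by (simp add: GK evT)
  then show ?thesis using KbK by (simp add: GK)
next
  case GKb
  show ?thesis by (simp add: GKb evT ee_def)
next
  case GL
  have "linx hTI (delta_norm_gen g) = Lb * L + Lb * K + Kb * L" by (simp add: GL evT)
  also have "\<dots> \<approx> ff + 0 + 0" by (intro cg_add LbL LbK KbL)
  finally show ?thesis by (simp add: GL)
next
  case GLb
  have "linx hTI (delta_norm_gen g) = L * Lb + L * Kb + K * Lb" by (simp add: GLb evT)
  also have "\<dots> \<approx> ff + 0 + 0" unfolding ff_def by (intro cg_add cg_refl LKb KLb)
  finally show ?thesis by (simp add: GLb)
next
  case GE
  have "linx hTI (delta_norm_gen g) = E - E * ((Kb + Lb) * (K + L))" by (simp add: GE evT algebra_simps)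
  also have "\<dots> \<approx> E - E * 1" by (intro cg_diff cg_refl cg_lmul WV)
  finally show ?thesis by (simp add: GE)
next
  case GF
  have "linx hTI (delta_norm_gen g) = 0" by (simp add: GF evT algebra_simps)
  then show ?thesis by (simp add: GF)
qed

lemma GCI: "linx (hAB chi id) (delta_norm_gen g) \<approx> gn g"
proof (cases g)
  case GK
  have "linx (hAB chi id) (delta_norm_gen g) = ee * K" by (simp add: GK evC)
  then show ?thesis using eK by (simp add: GK)
next
  case GKb
  have "linx (hAB chi id) (delta_norm_gen g) = ee * Kb" by (simp add: GKb evC)
  then show ?thesis using eKb by (simp add: GKb)
next
  case GL
  have "linx (hAB chi id) (delta_norm_gen g) = ff * L + ff * K + ee * L" by (simp add: GL evC)
  also have "\<dots> \<approx> L + 0 + 0" by (intro cg_add fL fK eL)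
  finally show ?thesis by (simp add: GL)
next
  case GLb
  have "linx (hAB chi id) (delta_norm_gen g) = ff * Lb + ff * Kb + ee * Lb" by (simp add: GLb evC)
  also have "\<dots> \<approx> Lb + 0 + 0" by (intro cg_add fLb fKb eLb)
  finally show ?thesis by (simp add: GLb)
next
  case GE
  show ?thesis by (simp add: GE evC)
next
  case GF
  have "linx (hAB chi id) (delta_norm_gen g) = (ee + ff) * F" by (simp add: GF evC algebra_simps)
  also have "\<dots> \<approx> 1 * F" by (intro cg_rmul r7)
  finally show ?thesis by (simp add: GF)
qed

lemma GCT: "linx (hAB chi antipode) (delta_norm_gen g) \<approx> S_gen g"
proof (cases g)
  case GK
  have "linx (hAB chi antipode) (delta_norm_gen g) = ee * Kb" by (simp add: GK evC)
  then show ?thesis using eKb by (simp add: GK)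
next
  case GKb
  have "linx (hAB chi antipode) (delta_norm_gen g) = ee * K" by (simp add: GKb evC)
  then show ?thesis using eK by (simp add: GKb)
next
  case GL
  have "linx (hAB chi antipode) (delta_norm_gen g) = ff * Lb + ff * Kb + ee * Lb" by (simp add: GL evC)
  also have "\<dots> \<approx> Lb + 0 + 0" by (intro cg_add fLb fKb eLb)
  finally show ?thesis by (simp add: GL)
next
  case GLb
  have "linx (hAB chi antipode) (delta_norm_gen g) = ff * L + ff * K + ee * L" by (simp add: GLb evC)
  also have "\<dots> \<approx> L + 0 + 0" by (intro cg_add fL fK eL)
  finally show ?thesis by (simp add: GLb)
next
  case GE
  show ?thesis by (simp add: GE evC)
next
  case GF
  have "linx (hAB chi antipode) (delta_norm_gen g) = (ee + ff) * (- ((K + L) * F))" by (simp add: GF evC algebra_simps)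
  also have "\<dots> \<approx> 1 * (- ((K + L) * F))" by (intro cg_rmul r7)
  finally show ?thesis by (simp add: GF)
qed


lemma chi_cons: "chi (dl (Wd (g # xs))) = chi_gen g * chi (dl (Wd xs))"
  by (simp add: dl_Cons chi_mult)
lemma chi_snoc: "chi (dl (Wd (xs @ [g]))) = chi (dl (Wd xs)) * chi_gen g"
  by (simp add: dl_snoc chi_mult)

lemma A1: "conv Delta_norm id antipode (dl w) \<approx> chi (dl w)"
proof -
  obtain xs where w: "w = Wd xs" by (cases w)
  have "conv Delta_norm id antipode (dl (Wd xs)) \<approx> chi (dl (Wd xs))"
  proof (induction xs)
    case Nil
    have "linx hIT (tens 1 1) = 1" by (simp only: linx_hAB_tens[OF islin_id islin_T] T_one id_apply mult_1)
    then show ?case unfolding conv_linx dl_Nil Dn_one by simp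
  next
    case (Cons g xs)
    have "conv Delta_norm id antipode (dl (Wd (g # xs))) = linx hIT (delta_norm_gen g * Delta_norm (dl (Wd xs)))"
      by (simp add: conv_linx dl_Cons ismul_Dn Dn_gn)
    also have "\<dots> \<approx> linx hIT (delta_norm_gen g) * chi (dl (Wd xs))"
      using Cons unfolding conv_linx by (rule GL[OF islin_id ismul_id islin_T isanti_T _ cent_chi])
    also have "\<dots> \<approx> chi_gen g * chi (dl (Wd xs))" by (rule cg_rmul[OF GLn])
    finally show ?case by (simp only: chi_cons)
  qed
  then show ?thesis by (simp only: w)
qed

lemma A2: "conv Delta_norm antipode id (dl w) \<approx> chi (dl w)"
proof -
  obtain xs where w: "w = Wd xs" by (cases w)
  have "conv Delta_norm antipode id (dl (Wd xs)) \<approx> chi (dl (Wd xs))"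
  proof (induction xs rule: rev_induct)
    case Nil
    have "linx hTI (tens 1 1) = 1" by (simp only: linx_hAB_tens[OF islin_T islin_id] T_one id_apply mult_1)
    then show ?case unfolding conv_linx dl_Nil Dn_one by simp
  next
    case (snoc g xs)
    have "conv Delta_norm antipode id (dl (Wd (xs @ [g]))) = linx hTI (Delta_norm (dl (Wd xs)) * delta_norm_gen g)"
      by (simp add: conv_linx dl_snoc ismul_Dn Dn_gn)
    also have "\<dots> \<approx> chi (dl (Wd xs)) * linx hTI (delta_norm_gen g)"
      using snoc unfolding conv_linx by (rule GR[OF islin_T isanti_T islin_id ismul_id _ cent_chi])
    also have "\<dots> \<approx> chi (dl (Wd xs)) * chi_gen g" by (rule cg_lmul[OF GRn])
    finally show ?case by (simp only: chi_snoc)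
  qed
  then show ?thesis by (simp only: w)
qed

lemma Phi_dl: "linx (hAB chi id) (Delta_norm (dl (Wd xs))) \<approx> dl (Wd xs)"
proof (induction xs)
  case Nil
  have h: "linx (hAB chi id) (tens 1 1) = 1" by (simp only: linx_hAB_tens[OF islin_chi islin_id] chi_one id_apply mult_1)
  show ?case unfolding dl_Nil Dn_one h by simp
next
  case (Cons g xs)
  have "linx (hAB chi id) (Delta_norm (dl (Wd (g # xs)))) = linx (hAB chi id) (delta_norm_gen g * Delta_norm (dl (Wd xs)))"
    by (simp add: dl_Cons ismul_Dn Dn_gn)
  also have "\<dots> \<approx> linx (hAB chi id) (delta_norm_gen g) * linx (hAB chi id) (Delta_norm (dl (Wd xs)))"
    by (rule Lmc[OF islin_chi ismul_chi cent_chi islin_id ismul_id])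
  also have "\<dots> \<approx> gn g * dl (Wd xs)" by (rule cg_mult[OF GCI Cons])
  finally show ?case by (simp only: dl_Cons)
qed

lemma Psi_dl: "linx (hAB chi antipode) (Delta_norm (dl (Wd xs))) \<approx> antipode (dl (Wd xs))"
proof (induction xs)
  case Nil
  have "linx (hAB chi antipode) (tens 1 1) = 1" by (simp only: linx_hAB_tens[OF islin_chi islin_T] chi_one T_one mult_1)
  then show ?case unfolding dl_Nil Dn_one by simp
next
  case (Cons g xs)
  have "linx (hAB chi antipode) (Delta_norm (dl (Wd (g # xs)))) = linx (hAB chi antipode) (delta_norm_gen g * Delta_norm (dl (Wd xs)))"
    by (simp add: dl_Cons ismul_Dn Dn_gn)
  also have "\<dots> \<approx> linx (hAB chi antipode) (Delta_norm (dl (Wd xs))) * linx (hAB chi antipode) (delta_norm_gen g)"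
    by (rule Lac[OF islin_chi ismul_chi cent_chi islin_T isanti_T])
  also have "\<dots> \<approx> antipode (dl (Wd xs)) * S_gen g" by (rule cg_mult[OF Cons GCT])
  finally show ?case by (simp only: dl_Cons T_mult T_gn)
qed

lemma Phi: "conv Delta_norm (conv Delta_norm id antipode) id x \<approx> x"
proof -
  have "conv Delta_norm (conv Delta_norm id antipode) id x \<approx> id x"
  proof (rule cg_islin[OF islin_conv[OF islin_Dn] islin_id])
    fix k :: word
    obtain xs where k: "k = Wd xs" by (cases k)
    have "conv Delta_norm (conv Delta_norm id antipode) id (dl k)
        = linx (hAB (conv Delta_norm id antipode) id) (Delta_norm (dl k))" by (rule conv_linx)
    also have "\<dots> \<approx> linx (hAB chi id) (Delta_norm (dl k))"
      by (rule cg_linx) (simp add: hAB_def cg_rmul[OF A1])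
    also have "\<dots> \<approx> dl k" unfolding k by (rule Phi_dl)
    finally show "conv Delta_norm (conv Delta_norm id antipode) id (dl k) \<approx> id (dl k)" by simp
  qed
  then show ?thesis by simp
qed

lemma Psi: "conv Delta_norm (conv Delta_norm antipode id) antipode x \<approx> antipode x"
proof (rule cg_islin[OF islin_conv[OF islin_Dn] islin_T])
  fix k :: word
  obtain xs where k: "k = Wd xs" by (cases k)
  have "conv Delta_norm (conv Delta_norm antipode id) antipode (dl k)
      = linx (hAB (conv Delta_norm antipode id) antipode) (Delta_norm (dl k))" by (rule conv_linx)
  also have "\<dots> \<approx> linx (hAB chi antipode) (Delta_norm (dl k))"
    by (rule cg_linx) (simp add: hAB_def cg_rmul[OF A2])
  also have "\<dots> \<approx> antipode (dl k)" unfolding k by (rule Psi_dl)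
  finally show "conv Delta_norm (conv Delta_norm antipode id) antipode (dl k) \<approx> antipode (dl k)" .
qed

end



lemma T_cst1: "antipode (cst c * x) = cst c * antipode x" by (rule islin_cst[OF islin_T])
lemma T_cstmul: "antipode (cst c * a * b) = cst c * (antipode b * antipode a)"
proof -
  have "antipode (cst c * a * b) = antipode b * (antipode a * cst c)" by (simp only: T_mult T_cst)
  also have "\<dots> = cst c * (antipode b * antipode a)" by (simp only: cst_central[of c "antipode a", symmetric] cst_left[of "antipode b" c])
  finally show ?thesis .
qed

context ictx begin
lemma T_ideal:
  assumes "\<And>r. r \<in> R \<Longrightarrow> antipode r \<approx> 0" and "a \<in> ideal_gen R"
  shows "antipode a \<in> ideal_gen R"
  using assms(2)
proof (induction rule: ideal_gen.induct)
  case (base r) then show ?case using assms(1) by (simp add: cg_def)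
next
  case zero then show ?case by (simp add: islin_zero[OF islin_T] ideal_gen.zero)
next
  case (add a b) then show ?case by (simp add: T_add ideal_gen.add)
next
  case (lmul a x) then show ?case by (simp add: T_mult ideal_gen.rmul)
next
  case (rmul a x) then show ?case by (simp add: T_mult ideal_gen.lmul)
qed
end

context ualg begin

lemma KW: "K * (Kb + Lb) \<approx> (Kb + Lb) * K"
proof -
  have "K * (Kb + Lb) = K * Kb + K * Lb" by (simp add: algebra_simps)
  also have "\<dots> \<approx> Kb * K + 0" by (intro cg_add r3 KLb)
  also have "\<dots> \<approx> Kb * K + Lb * K" by (intro cg_add cg_refl cg_sym[OF LbK])
  finally show ?thesis by (simp add: algebra_simps)
qed
lemma KbW: "Kb * (Kb + Lb) \<approx> (Kb + Lb) * Kb"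
proof -
  have "Kb * (Kb + Lb) = Kb * Kb + Kb * Lb" by (simp add: algebra_simps)
  also have "\<dots> \<approx> Kb * Kb + 0" by (intro cg_add cg_refl KbLb)
  also have "\<dots> \<approx> Kb * Kb + Lb * Kb" by (intro cg_add cg_refl cg_sym[OF LbKb])
  finally show ?thesis by (simp add: algebra_simps)
qed
lemma LW: "L * (Kb + Lb) \<approx> (Kb + Lb) * L"
proof -
  have "L * (Kb + Lb) = L * Kb + L * Lb" by (simp add: algebra_simps)
  also have "\<dots> \<approx> 0 + Lb * L" by (intro cg_add LKb r6)
  also have "\<dots> \<approx> Kb * L + Lb * L" by (intro cg_add cg_refl cg_sym[OF KbL])
  finally show ?thesis by (simp add: algebra_simps)
qed
lemma LbW: "Lb * (Kb + Lb) \<approx> (Kb + Lb) * Lb"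
proof -
  have "Lb * (Kb + Lb) = Lb * Kb + Lb * Lb" by (simp add: algebra_simps)
  also have "\<dots> \<approx> 0 + Lb * Lb" by (intro cg_add cg_refl LbKb)
  also have "\<dots> \<approx> Kb * Lb + Lb * Lb" by (intro cg_add cg_refl cg_sym[OF KbLb])
  finally show ?thesis by (simp add: algebra_simps)
qed
lemma KV: "K * (K + L) \<approx> (K + L) * K"
proof -
  have "K * (K + L) = K * K + K * L" by (simp add: algebra_simps)
  also have "\<dots> \<approx> K * K + 0" by (intro cg_add cg_refl KL)
  also have "\<dots> \<approx> K * K + L * K" by (intro cg_add cg_refl cg_sym[OF LK])
  finally show ?thesis by (simp add: algebra_simps)
qed
lemma KbV: "Kb * (K + L) \<approx> (K + L) * Kb"
proof -
  have "Kb * (K + L) = Kb * K + Kb * L" by (simp add: algebra_simps)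
  also have "\<dots> \<approx> K * Kb + 0" by (intro cg_add cg_sym[OF r3] KbL)
  also have "\<dots> \<approx> K * Kb + L * Kb" by (intro cg_add cg_refl cg_sym[OF LKb])
  finally show ?thesis by (simp add: algebra_simps)
qed
lemma LV: "L * (K + L) \<approx> (K + L) * L"
proof -
  have "L * (K + L) = L * K + L * L" by (simp add: algebra_simps)
  also have "\<dots> \<approx> 0 + L * L" by (intro cg_add cg_refl LK)
  also have "\<dots> \<approx> K * L + L * L" by (intro cg_add cg_refl cg_sym[OF KL])
  finally show ?thesis by (simp add: algebra_simps)
qed
lemma LbV: "Lb * (K + L) \<approx> (K + L) * Lb"
proof -
  have "Lb * (K + L) = Lb * K + Lb * L" by (simp add: algebra_simps)
  also have "\<dots> \<approx> 0 + L * Lb" by (intro cg_add LbK cg_sym[OF r6])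
  also have "\<dots> \<approx> K * Lb + L * Lb" by (intro cg_add cg_refl cg_sym[OF KLb])
  finally show ?thesis by (simp add: algebra_simps)
qed

lemma relE_gen:
  assumes y: "Y' * E \<approx> cst d * (E * Y)" and cd: "c * d = 1" and w: "Y * (Kb + Lb) \<approx> (Kb + Lb) * Y"
  shows "- (E * (Kb + Lb)) * Y - cst c * (Y' * - (E * (Kb + Lb))) \<approx> 0"
proof -
  let ?W = "Kb + Lb"
  have "cst c * (Y' * (E * ?W)) = cst c * ((Y' * E) * ?W)" by (simp add: mult.assoc)
  also have "\<dots> \<approx> cst c * ((cst d * (E * Y)) * ?W)" by (rule cg_lmul[OF cg_rmul[OF y]])
  also have "\<dots> = cst (c * d) * (E * (Y * ?W))" by (simp add: mult.assoc cst_cst)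
  also have "\<dots> \<approx> cst (c * d) * (E * (?W * Y))" by (rule cg_lmul[OF cg_lmul[OF w]])
  finally have h: "cst c * (Y' * (E * ?W)) \<approx> E * ?W * Y" by (simp add: cd mult.assoc)
  have "- (E * ?W) * Y - cst c * (Y' * - (E * ?W)) = cst c * (Y' * (E * ?W)) - E * ?W * Y"
    by (simp add: algebra_simps)
  also have "\<dots> \<approx> E * ?W * Y - E * ?W * Y" by (rule cg_diff[OF h cg_refl])
  finally show ?thesis by simp
qed

lemma relF_gen:
  assumes y: "Y' * F \<approx> cst d * (F * Y)" and cd: "c * d = 1" and v: "Y' * (K + L) \<approx> (K + L) * Y'"
  shows "- ((K + L) * F) * Y - cst c * (Y' * - ((K + L) * F)) \<approx> 0"
proof -
  let ?V = "K + L"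
  have "cst c * (Y' * (?V * F)) = cst c * ((Y' * ?V) * F)" by (simp add: mult.assoc)
  also have "\<dots> \<approx> cst c * ((?V * Y') * F)" by (rule cg_lmul[OF cg_rmul[OF v]])
  also have "\<dots> = cst c * (?V * (Y' * F))" by (simp add: mult.assoc)
  also have "\<dots> \<approx> cst c * (?V * (cst d * (F * Y)))" by (rule cg_lmul[OF cg_lmul[OF y]])
  also have "\<dots> = cst (c * d) * (?V * (F * Y))" by (simp only: cst_left[of "?V" d] cst_cst)
  finally have h: "cst c * (Y' * (?V * F)) \<approx> ?V * F * Y" by (simp add: cd mult.assoc)
  have "- (?V * F) * Y - cst c * (Y' * - (?V * F)) = cst c * (Y' * (?V * F)) - ?V * F * Y"
    by (simp add: algebra_simps)
  also have "\<dots> \<approx> ?V * F * Y - ?V * F * Y" by (rule cg_diff[OF h cg_refl])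
  finally show ?thesis by simp
qed

lemma comm3:
  assumes x: "X * F \<approx> cst a * (F * X')" and y: "X' * E \<approx> cst b * (E * X'')" and ab: "a * b = 1"
  shows "X * (F * E) \<approx> (F * E) * X''"
proof -
  have "X * (F * E) = (X * F) * E" by (simp add: mult.assoc)
  also have "\<dots> \<approx> (cst a * (F * X')) * E" by (rule cg_rmul[OF x])
  also have "\<dots> = cst a * (F * (X' * E))" by (simp add: mult.assoc)
  also have "\<dots> \<approx> cst a * (F * (cst b * (E * X'')))" by (rule cg_lmul[OF cg_lmul[OF y]])
  also have "\<dots> = cst (a * b) * (F * (E * X''))" by (simp only: cst_left[of F b] cst_cst)
  finally show ?thesis by (simp add: ab mult.assoc)
qed

lemma T_c8:
  assumes vfe: "(K + L) * (F * E) \<approx> (F * E) * (K + L)"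
  shows "antipode (E * F - F * E - cst (1 / (q - inverse q)) * ((K + L) - (Kb + Lb))) \<approx> 0"
proof -
  let ?V = "K + L" and ?W = "Kb + Lb"
  have e: "antipode (E * F - F * E - cst (1 / (q - inverse q)) * (?V - ?W))
      = (- (?V * F)) * (- (E * ?W)) - (- (E * ?W)) * (- (?V * F)) - cst (1 / (q - inverse q)) * (?W - ?V)"
    by (simp only: T_diff T_cst1, simp only: T_mult T_add T_gn S_gen.simps)
  have a: "(- (?V * F)) * (- (E * ?W)) \<approx> F * E"
  proof -
    have "(- (?V * F)) * (- (E * ?W)) = ?V * (F * E) * ?W" by (simp add: mult.assoc)
    also have "\<dots> \<approx> (F * E) * ?V * ?W" by (rule cg_rmul[OF vfe])
    also have "\<dots> = F * E * (?V * ?W)" by (simp add: mult.assoc)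
    also have "\<dots> \<approx> F * E * 1" by (rule cg_lmul[OF VW])
    finally show ?thesis by simp
  qed
  have b: "(- (E * ?W)) * (- (?V * F)) \<approx> E * F"
  proof -
    have "(- (E * ?W)) * (- (?V * F)) = E * (?W * ?V) * F" by (simp add: mult.assoc)
    also have "\<dots> \<approx> E * 1 * F" by (rule cg_ctx[OF WV])
    finally show ?thesis by simp
  qed
  have c: "F * E - E * F \<approx> cst (1 / (q - inverse q)) * (?W - ?V)"
  proof -
    have "- (E * F - F * E) \<approx> - (cst (1 / (q - inverse q)) * (?V - ?W))" by (rule cg_uminus[OF r8])
    then show ?thesis by (simp add: algebra_simps)
  qed
  have "(- (?V * F)) * (- (E * ?W)) - (- (E * ?W)) * (- (?V * F)) - cst (1 / (q - inverse q)) * (?W - ?V)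
      \<approx> (F * E - E * F) - cst (1 / (q - inverse q)) * (?W - ?V)" by (intro cg_diff a b cg_refl)
  also have "\<dots> \<approx> cst (1 / (q - inverse q)) * (?W - ?V) - cst (1 / (q - inverse q)) * (?W - ?V)" by (intro cg_diff c cg_refl)
  finally show ?thesis by (simp add: e)
qed


lemma cg_diff0: "a \<approx> b \<Longrightarrow> a - b \<approx> 0" by (simp add: cg_def)

lemma T_common:
  assumes vfe: "(K + L) * (F * E) \<approx> (F * E) * (K + L)"
  shows "r \<in> common_rels q \<Longrightarrow> antipode r \<approx> 0"
proof -
  have c1: "antipode (K * Kb * K - K) \<approx> 0"
  proof -
    have "antipode (K * Kb * K - K) = Kb * K * Kb - Kb" by (simp only: T_diff T_mult T_gn S_gen.simps mult.assoc)
    then show ?thesis using cg_diff0[OF r2] by simp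
  qed
  have c2: "antipode (Kb * K * Kb - Kb) \<approx> 0"
  proof -
    have "antipode (Kb * K * Kb - Kb) = K * Kb * K - K" by (simp only: T_diff T_mult T_gn S_gen.simps mult.assoc)
    then show ?thesis using cg_diff0[OF r1] by simp
  qed
  have c3: "antipode (K * Kb - Kb * K) \<approx> 0"
  proof -
    have "antipode (K * Kb - Kb * K) = K * Kb - Kb * K" by (simp only: T_diff T_mult T_gn S_gen.simps)
    then show ?thesis using cg_diff0[OF r3] by simp
  qed
  have c4: "antipode (L * Lb * L - L) \<approx> 0"
  proof -
    have "antipode (L * Lb * L - L) = Lb * L * Lb - Lb" by (simp only: T_diff T_mult T_gn S_gen.simps mult.assoc)
    then show ?thesis using cg_diff0[OF r5] by simp
  qed
  have c5: "antipode (Lb * L * Lb - Lb) \<approx> 0"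
  proof -
    have "antipode (Lb * L * Lb - Lb) = L * Lb * L - L" by (simp only: T_diff T_mult T_gn S_gen.simps mult.assoc)
    then show ?thesis using cg_diff0[OF r4] by simp
  qed
  have c6: "antipode (L * Lb - Lb * L) \<approx> 0"
  proof -
    have "antipode (L * Lb - Lb * L) = L * Lb - Lb * L" by (simp only: T_diff T_mult T_gn S_gen.simps)
    then show ?thesis using cg_diff0[OF r6] by simp
  qed
  have c7: "antipode (K * Kb + L * Lb - 1) \<approx> 0"
  proof -
    have "antipode (K * Kb + L * Lb - 1) = ee + ff - 1" by (simp only: T_diff T_add T_one T_mult T_gn S_gen.simps ee_def ff_def)
    then show ?thesis using cg_diff0[OF r7] by simp
  qed
  have c8: "antipode (E * F - F * E - cst (1 / (q - inverse q)) * ((K + L) - (Kb + Lb))) \<approx> 0"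
    by (rule T_c8[OF vfe])
  assume "r \<in> common_rels q"
  then show ?thesis unfolding common_rels_def using c1 c2 c3 c4 c5 c6 c7 c8
    by (elim insertE emptyE; (hypsubst)?; blast)
qed

end

context unorm begin

lemma VFE: "(K + L) * (F * E) \<approx> (F * E) * (K + L)"
proof -
  have "(K + L) * (F * E) = K * (F * E) + L * (F * E)" by (simp add: algebra_simps)
  also have "\<dots> \<approx> (F * E) * K + (F * E) * L" by (intro cg_add comm3[OF n5 n1 qq1] comm3[OF n6 n2 qq1])
  finally show ?thesis by (simp add: algebra_simps)
qed

lemma T_rels: "r \<in> norm_rels q \<Longrightarrow> antipode r \<approx> 0"
proof -
  have "antipode (K * E - cst (q^2) * E * K) \<approx> 0"
    by (simp only: T_diff T_cstmul, simp only: T_mult T_gn S_gen.simps, rule relE_gen[OF n3 qq2 KbW])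
  moreover have "antipode (L * E - cst (q^2) * E * L) \<approx> 0"
    by (simp only: T_diff T_cstmul, simp only: T_mult T_gn S_gen.simps, rule relE_gen[OF n4 qq2 LbW])
  moreover have "antipode (Kb * E - cst (inverse (q^2)) * E * Kb) \<approx> 0"
    by (simp only: T_diff T_cstmul, simp only: T_mult T_gn S_gen.simps, rule relE_gen[OF n1 qq1 KW])
  moreover have "antipode (Lb * E - cst (inverse (q^2)) * E * Lb) \<approx> 0"
    by (simp only: T_diff T_cstmul, simp only: T_mult T_gn S_gen.simps, rule relE_gen[OF n2 qq1 LW])
  moreover have "antipode (K * F - cst (inverse (q^2)) * F * K) \<approx> 0"
    by (simp only: T_diff T_cstmul, simp only: T_mult T_gn S_gen.simps, rule relF_gen[OF n7 qq1 KbV])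
  moreover have "antipode (L * F - cst (inverse (q^2)) * F * L) \<approx> 0"
    by (simp only: T_diff T_cstmul, simp only: T_mult T_gn S_gen.simps, rule relF_gen[OF n8 qq1 LbV])
  moreover have "antipode (Kb * F - cst (q^2) * F * Kb) \<approx> 0"
    by (simp only: T_diff T_cstmul, simp only: T_mult T_gn S_gen.simps, rule relF_gen[OF n5 qq2 KV])
  moreover have "antipode (Lb * F - cst (q^2) * F * Lb) \<approx> 0"
    by (simp only: T_diff T_cstmul, simp only: T_mult T_gn S_gen.simps, rule relF_gen[OF n6 qq2 LV])
  ultimately show "r \<in> norm_rels q \<Longrightarrow> antipode r \<approx> 0"
    unfolding norm_rels_def using T_common[OF VFE]
    by (elim UnE insertE emptyE; (hypsubst)?; blast)
qed

end

locale utwist = ualg + assumes tr: "twist_rels q \<subseteq> R"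
begin

lemma trel': "x - y \<in> twist_rels q \<Longrightarrow> x \<approx> y" using tr by (auto intro: cg_base simp: cg_def ideal_gen.base)

lemma t1: "K * E \<approx> cst (q^2) * (E * L)"
  using trel'[of "K * E" "cst (q^2) * E * L"] by (simp add: twist_rels_def mult.assoc)
lemma t2: "L * E \<approx> cst (q^2) * (E * K)"
  using trel'[of "L * E" "cst (q^2) * E * K"] by (simp add: twist_rels_def mult.assoc)
lemma t3: "Kb * E \<approx> cst (inverse (q^2)) * (E * Lb)"
  using trel'[of "Kb * E" "cst (inverse (q^2)) * E * Lb"] by (simp add: twist_rels_def mult.assoc)
lemma t4: "Lb * E \<approx> cst (inverse (q^2)) * (E * Kb)"
  using trel'[of "Lb * E" "cst (inverse (q^2)) * E * Kb"] by (simp add: twist_rels_def mult.assoc)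
lemma t5: "K * F \<approx> cst (inverse (q^2)) * (F * L)"
  using trel'[of "K * F" "cst (inverse (q^2)) * F * L"] by (simp add: twist_rels_def mult.assoc)
lemma t6: "L * F \<approx> cst (inverse (q^2)) * (F * K)"
  using trel'[of "L * F" "cst (inverse (q^2)) * F * K"] by (simp add: twist_rels_def mult.assoc)
lemma t7: "Kb * F \<approx> cst (q^2) * (F * Lb)"
  using trel'[of "Kb * F" "cst (q^2) * F * Lb"] by (simp add: twist_rels_def mult.assoc)
lemma t8: "Lb * F \<approx> cst (q^2) * (F * Kb)"
  using trel'[of "Lb * F" "cst (q^2) * F * Kb"] by (simp add: twist_rels_def mult.assoc)

lemma qq1t: "inverse (q^2) * q^2 = 1" using q0 by simp
lemma qq2t: "q^2 * inverse (q^2) = 1" using q0 by simp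

lemma VFEt: "(K + L) * (F * E) \<approx> (F * E) * (K + L)"
proof -
  have "(K + L) * (F * E) = K * (F * E) + L * (F * E)" by (simp add: algebra_simps)
  also have "\<dots> \<approx> (F * E) * K + (F * E) * L" by (intro cg_add comm3[OF t5 t2 qq1t] comm3[OF t6 t1 qq1t])
  finally show ?thesis by (simp add: algebra_simps)
qed

lemma T_rels: "r \<in> twist_rels q \<Longrightarrow> antipode r \<approx> 0"
proof -
  have "antipode (K * E - cst (q^2) * E * L) \<approx> 0"
    by (simp only: T_diff T_cstmul, simp only: T_mult T_gn S_gen.simps, rule relE_gen[OF t4 qq2t KbW])
  moreover have "antipode (L * E - cst (q^2) * E * K) \<approx> 0"
    by (simp only: T_diff T_cstmul, simp only: T_mult T_gn S_gen.simps, rule relE_gen[OF t3 qq2t LbW])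
  moreover have "antipode (Kb * E - cst (inverse (q^2)) * E * Lb) \<approx> 0"
    by (simp only: T_diff T_cstmul, simp only: T_mult T_gn S_gen.simps, rule relE_gen[OF t2 qq1t KW])
  moreover have "antipode (Lb * E - cst (inverse (q^2)) * E * Kb) \<approx> 0"
    by (simp only: T_diff T_cstmul, simp only: T_mult T_gn S_gen.simps, rule relE_gen[OF t1 qq1t LW])
  moreover have "antipode (K * F - cst (inverse (q^2)) * F * L) \<approx> 0"
    by (simp only: T_diff T_cstmul, simp only: T_mult T_gn S_gen.simps, rule relF_gen[OF t8 qq1t LbV])
  moreover have "antipode (L * F - cst (inverse (q^2)) * F * K) \<approx> 0"
    by (simp only: T_diff T_cstmul, simp only: T_mult T_gn S_gen.simps, rule relF_gen[OF t7 qq1t KbV])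
  moreover have "antipode (Kb * F - cst (q^2) * F * Lb) \<approx> 0"
    by (simp only: T_diff T_cstmul, simp only: T_mult T_gn S_gen.simps, rule relF_gen[OF t6 qq2t LV])
  moreover have "antipode (Lb * F - cst (q^2) * F * Kb) \<approx> 0"
    by (simp only: T_diff T_cstmul, simp only: T_mult T_gn S_gen.simps, rule relF_gen[OF t5 qq2t KV])
  ultimately show "r \<in> twist_rels q \<Longrightarrow> antipode r \<approx> 0"
    unfolding twist_rels_def using T_common[OF VFEt]
    by (elim UnE insertE emptyE; (hypsubst)?; blast)
qed

end



theorem mainTheorem11:
  fixes q :: complex
  assumes "q \<noteq> 0" and "q \<noteq> 1" and "q \<noteq> -1"
  shows
    "((\<forall>a\<in>I_twist q. antipode a \<in> I_twist q)
      \<and> (\<forall>x. conv Delta_twist antipode id x - eta (eps x) \<in> I_twist q)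
      \<and> (\<forall>x. conv Delta_twist id antipode x - eta (eps x) \<in> I_twist q))
   \<and> ((\<forall>a\<in>I_norm q. antipode a \<in> I_norm q)
      \<and> (\<forall>x. conv Delta_norm (conv Delta_norm id antipode) id x - x \<in> I_norm q)
      \<and> (\<forall>x. conv Delta_norm (conv Delta_norm antipode id) antipode x - antipode x \<in> I_norm q))"
proof -
  interpret t: utwist "twist_rels q" q
    by unfold_locales (auto simp: assms(1) twist_rels_def)
  interpret n: unorm "norm_rels q" q
    by unfold_locales (auto simp: assms(1) norm_rels_def)
  have T1: "\<forall>a\<in>I_twist q. antipode a \<in> I_twist q"
    unfolding I_twist_def using t.T_ideal[OF t.T_rels] by blast
  have T2: "\<forall>x. conv Delta_twist antipode id x - eta (eps x) \<in> I_twist q"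
    unfolding I_twist_def using t.twist_SI by (simp add: cg_def)
  have T3: "\<forall>x. conv Delta_twist id antipode x - eta (eps x) \<in> I_twist q"
    unfolding I_twist_def using t.twist_IS by (simp add: cg_def)
  have N1: "\<forall>a\<in>I_norm q. antipode a \<in> I_norm q"
    unfolding I_norm_def using n.T_ideal[OF n.T_rels] by blast
  have N2: "\<forall>x. conv Delta_norm (conv Delta_norm id antipode) id x - x \<in> I_norm q"
    unfolding I_norm_def using n.Phi by (simp add: cg_def)
  have N3: "\<forall>x. conv Delta_norm (conv Delta_norm antipode id) antipode x - antipode x \<in> I_norm q"
    unfolding I_norm_def using n.Psi by (simp add: cg_def)
  show ?thesis using T1 T2 T3 N1 N2 N3 by blast
qed


end
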